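(* Let $d\ge1$ and let $\mathcal{Q}=\{Q_1,\dots,Q_{d+1}\}$ be closed cubes in $\mathbb{R}^d$. For points $x^j=(x^j_1,\dots,x^j_d)\in Q_j$, $1\le j\le d+1$, let $\mathbf{L}(x)=(L_1,\dots,L_{2d})$ where $L_\ell:\mathbb{R}^{d+1}\to\mathbb{R}$, $L_\ell(v)=v_\ell+2x^1_\ell v_{d+1}$ for $1\le\ell\le d$, and $L_{d+\ell}:\mathbb{R}^{d+1}\to\mathbb{R}^d$, $L_{d+\ell}(v)=(v_1+2x^{\ell+1}_1v_{d+1},\dots,v_d+2x^{\ell+1}_dv_{d+1})$ for $1\le\ell\le d$; let $\mathbf{p}=(\frac1d,\dots,\frac1d)\in\mathbb{R}^{2d}$. (i) If $\mathcal{Q}$ is weakly transversal with pivot $Q_1$, then $\mathrm{BL}(\mathbf{L}(x),\mathbf{p})<\infty$ for every choice of points $x^j\in Q_j$. (ii) Conversely, if $\mathrm{BL}(\mathbf{L}(x),\mathbf{p})<\infty$ for every choice of points $x^j\in Q_j$, then each $Q_l$ can be partitioned into finitely many sub-cubes $Q_l=\bigcup_iQ_{l,i}$ such that every collection $\{\widetilde Q_1,\dots,\widetilde Q_{d+1}\}$ with $\widetilde Q_l\in\{Q_{l,i}\}_i$ is weakly transversal with pivot $\widetilde Q_1\subset Q_1$.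
   Context: "Cube" means a rectangular box. $\pi_l$ is projection onto the $l$-th coordinate axis. A collection $\{Q_1,\dots,Q_{d+1}\}$ is weakly transversal with pivot $Q_1$ if there is a permutation $(i_1,\dots,i_d)$ of $(1,\dots,d)$ with $\overline{\pi_{i_s}(Q_1)}\cap\overline{\pi_{i_s}(Q_{s+1})}=\emptyset$ for $s=1,\dots,d$. For linear maps $L_j:\mathbb{R}^n\to\mathbb{R}^{n_j}$ and $p_j\ge0$, $\mathrm{BL}(\mathbf{L},\mathbf{p})\in[0,\infty]$ is the smallest constant $C$ such that $\int_{\mathbb{R}^n}\prod_j(f_j\circ L_j)^{p_j}\le C\prod_j(\int_{\mathbb{R}^{n_j}}f_j)^{p_j}$ for all nonnegative $f_j\in L^1(\mathbb{R}^{n_j})$. (The maps are $L_\ell=(d\gamma_\ell(x^1_\ell))^*$ and $L_{d+\ell}=(d\Gamma(x^{\ell+1}))^*$ for $\Gamma(x)=(x,|x|^2)$ and $\gamma_\ell(s)=(s e_\ell,s^2)$.) *)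

theory Defs
  imports "HOL-Analysis.Analysis"
begin

definition is_cube :: "(real^'d) set \<Rightarrow> bool" where
  "is_cube Q \<longleftrightarrow> (\<exists>a b. (\<forall>i. a $ i \<le> b $ i) \<and> Q = cbox a b)"

text \<open>Weak transversality with pivot Q0 of the collection {Q0} together with Q l (l in 'd),
  where Q l plays the role of Q_{l+1}.  The coordinate index set of R^d is also 'd.\<close>
definition weakly_transversal :: "(real^'d) set \<Rightarrow> ('d \<Rightarrow> (real^'d) set) \<Rightarrow> bool" where
  "weakly_transversal Q0 Q \<longleftrightarrow>
     (\<exists>\<sigma>::'d \<Rightarrow> 'd. bij \<sigma> \<and>
        (\<forall>s. closure ((\<lambda>x. x $ \<sigma> s) ` Q0) \<inter> closure ((\<lambda>x. x $ \<sigma> s) ` Q s) = {}))"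

definition cube_partition :: "(real^'d) set \<Rightarrow> (real^'d) set set \<Rightarrow> bool" where
  "cube_partition Q P \<longleftrightarrow> finite P \<and> (\<forall>R\<in>P. is_cube R \<and> R \<subseteq> Q) \<and> \<Union>P = Q \<and>
     (\<forall>R\<in>P. \<forall>R'\<in>P. R \<noteq> R' \<longrightarrow> interior R \<inter> interior R' = {})"

definition BL :: "('i::finite \<Rightarrow> 'a::euclidean_space \<Rightarrow> 'b::euclidean_space) \<Rightarrow> ('i \<Rightarrow> real)
    \<Rightarrow> ('k::finite \<Rightarrow> 'a \<Rightarrow> 'c::euclidean_space) \<Rightarrow> ('k \<Rightarrow> real) \<Rightarrow> ennreal" where
  "BL L p M q = Inf {C. \<forall>(f::'i \<Rightarrow> 'b \<Rightarrow> real) (g::'k \<Rightarrow> 'c \<Rightarrow> real).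
      (\<forall>i. f i \<in> borel_measurable lborel \<and> (\<forall>y. 0 \<le> f i y) \<and> integrable lborel (f i)) \<and>
      (\<forall>k. g k \<in> borel_measurable lborel \<and> (\<forall>y. 0 \<le> g k y) \<and> integrable lborel (g k)) \<longrightarrow>
      (\<integral>\<^sup>+ x. ennreal ((\<Prod>i\<in>UNIV. f i (L i x) powr p i) * (\<Prod>k\<in>UNIV. g k (M k x) powr q k)) \<partial>lborel)
        \<le> C * ennreal ((\<Prod>i\<in>UNIV. (\<integral>y. f i y \<partial>lborel) powr p i) *
                        (\<Prod>k\<in>UNIV. (\<integral>y. g k y \<partial>lborel) powr q k))}"

text \<open>R^{d+1} is modelled as real^'d \<times> real, v = (v_1..v_d, v_{d+1}).\<close>
definition Lmap :: "real^'d \<Rightarrow> 'd \<Rightarrow> ((real^'d) \<times> real) \<Rightarrow> real" where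
  "Lmap x1 l v = fst v $ l + 2 * x1 $ l * snd v"

definition Mmap :: "('d \<Rightarrow> real^'d) \<Rightarrow> 'd \<Rightarrow> ((real^'d) \<times> real) \<Rightarrow> real^'d" where
  "Mmap x l v = (\<chi> k. fst v $ k + 2 * x l $ k * snd v)"

end

theory Submission
  imports Defs
begin

lemma measurable_vec_nth_real[measurable]: "(\<lambda>x::real^'n. x $ i) \<in> borel_measurable borel"
  by (rule borel_measurable_continuous_onI) (rule linear_continuous_on[OF bounded_linear_vec_nth])

lemma measurable_vec_nth_vec[measurable]: "(\<lambda>x::(real^'n)^'m. x $ i) \<in> borel_measurable borel"
  by (rule borel_measurable_continuous_onI) (rule linear_continuous_on[OF bounded_linear_vec_nth])

lemma nn_integral_lborel_shift:
  fixes f :: "'a::euclidean_space \<Rightarrow> ennreal"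
  assumes [measurable]: "f \<in> borel_measurable borel"
  shows "(\<integral>\<^sup>+x. f (x + c) \<partial>lborel) = (\<integral>\<^sup>+x. f x \<partial>lborel)"
proof -
  have "(\<integral>\<^sup>+x. f x \<partial>lborel) = (\<integral>\<^sup>+x. f x \<partial>(distr lborel borel ((+) c)))"
    by (simp add: lborel_distr_plus)
  also have "\<dots> = (\<integral>\<^sup>+x. f (c + x) \<partial>lborel)"
    by (subst nn_integral_distr) auto
  finally show ?thesis by (simp add: add.commute)
qed

lemma two_fun:
  fixes f :: "real \<Rightarrow> real" and g :: "real^'d \<Rightarrow> real" and a b :: "real^'d" and k :: 'd
  assumes f[measurable]: "f \<in> borel_measurable borel" and g[measurable]: "g \<in> borel_measurable borel"
    and nf: "\<And>y. 0 \<le> f y" and ng: "\<And>y. 0 \<le> g y" and ne: "a$k \<noteq> b$k"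
  shows "(\<integral>\<^sup>+v. ennreal (f (fst v $ k + 2 * a$k * snd v) * g (\<chi> j. fst v $ j + 2 * b$j * snd v)) \<partial>lborel)
     = ennreal (1 / \<bar>2*(a$k - b$k)\<bar>) * (\<integral>\<^sup>+y. f y \<partial>lborel) * (\<integral>\<^sup>+y. g y \<partial>lborel)"
proof -
  define c where "c = 2*(a$k - b$k)"
  have c0: "c \<noteq> 0" using ne by (simp add: c_def)
  have eqv: "(\<chi> j. y $ j + 2 * b$j * t) = y + (2*t) *\<^sub>R b" for y :: "real^'d" and t
    by (vector algebra_simps)
  have "(\<integral>\<^sup>+v. ennreal (f (fst v $ k + 2 * a$k * snd v) * g (\<chi> j. fst v $ j + 2 * b$j * snd v)) \<partial>lborel)
     = (\<integral>\<^sup>+v. ennreal (f (fst v $ k + 2 * a$k * snd v) * g (\<chi> j. fst v $ j + 2 * b$j * snd v)) \<partial>(lborel \<Otimes>\<^sub>M lborel))"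
    by (simp only: lborel_prod)
  also have "\<dots> = (\<integral>\<^sup>+t. \<integral>\<^sup>+y. ennreal (f (y $ k + 2 * a$k * t) * g (y + (2*t) *\<^sub>R b)) \<partial>lborel \<partial>lborel)"
    by (subst lborel_pair.nn_integral_snd[symmetric]) (auto simp: eqv)
  also have "\<dots> = (\<integral>\<^sup>+t. \<integral>\<^sup>+u. ennreal (f (u $ k + c * t) * g u) \<partial>lborel \<partial>lborel)"
  proof (rule nn_integral_cong)
    fix t :: real
    have "(\<integral>\<^sup>+y. ennreal (f (y $ k + 2 * a$k * t) * g (y + (2*t) *\<^sub>R b)) \<partial>lborel)
        = (\<integral>\<^sup>+y. (\<lambda>u. ennreal (f (u $ k + c * t) * g u)) (y + (2*t) *\<^sub>R b) \<partial>lborel)"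
      by (rule nn_integral_cong) (simp add: c_def algebra_simps)
    also have "\<dots> = (\<integral>\<^sup>+u. ennreal (f (u $ k + c * t) * g u) \<partial>lborel)"
      by (rule nn_integral_lborel_shift) simp
    finally show "(\<integral>\<^sup>+y. ennreal (f (y $ k + 2 * a$k * t) * g (y + (2*t) *\<^sub>R b)) \<partial>lborel)
        = (\<integral>\<^sup>+u. ennreal (f (u $ k + c * t) * g u) \<partial>lborel)" .
  qed
  also have "\<dots> = (\<integral>\<^sup>+u. \<integral>\<^sup>+t. ennreal (f (u $ k + c * t) * g u) \<partial>lborel \<partial>lborel)"
    by (rule lborel_pair.Fubini') simp
  also have "\<dots> = (\<integral>\<^sup>+u. ennreal (g u) * \<integral>\<^sup>+t. ennreal (f (u $ k + c * t)) \<partial>lborel \<partial>lborel)"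
    by (rule nn_integral_cong)
       (simp add: ennreal_mult nf ng nn_integral_cmult mult.commute del: ennreal_mult')
  also have "\<dots> = (\<integral>\<^sup>+u. ennreal (g u) * (ennreal (1/\<bar>c\<bar>) * \<integral>\<^sup>+t. ennreal (f t) \<partial>lborel) \<partial>lborel)"
  proof (rule nn_integral_cong)
    fix u :: "real^'d"
    have "(\<integral>\<^sup>+t. ennreal (f t) \<partial>lborel) = \<bar>c\<bar> * (\<integral>\<^sup>+t. ennreal (f (u$k + c * t)) \<partial>lborel)"
      by (rule nn_integral_real_affine[OF _ c0]) simp
    then have "ennreal (1/\<bar>c\<bar>) * (\<integral>\<^sup>+t. ennreal (f t) \<partial>lborel) = (\<integral>\<^sup>+t. ennreal (f (u$k + c * t)) \<partial>lborel)"
      using c0 by (simp add: mult.assoc[symmetric] ennreal_mult[symmetric] del: ennreal_mult')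
    then show "ennreal (g u) * \<integral>\<^sup>+t. ennreal (f (u $ k + c * t)) \<partial>lborel = ennreal (g u) * (ennreal (1/\<bar>c\<bar>) * \<integral>\<^sup>+t. ennreal (f t) \<partial>lborel)"
      by simp
  qed
  also have "\<dots> = ennreal (1/\<bar>c\<bar>) * (\<integral>\<^sup>+t. ennreal (f t) \<partial>lborel) * (\<integral>\<^sup>+u. ennreal (g u) \<partial>lborel)"
    by (subst nn_integral_multc) (auto simp: mult.commute)
  finally show ?thesis by (simp add: c_def)
qed


lemma gm_int:
  fixes h :: "'d::finite \<Rightarrow> 'a \<Rightarrow> real" and A :: "'d \<Rightarrow> real"
  assumes meas: "\<And>s. h s \<in> borel_measurable M" and nn: "\<And>s x. 0 \<le> h s x" and A: "\<And>s. 0 \<le> A s"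
   and le: "\<And>s. (\<integral>\<^sup>+x. ennreal (h s x) \<partial>M) \<le> ennreal (A s)"
  shows "(\<integral>\<^sup>+x. ennreal (\<Prod>s\<in>UNIV. h s x powr (1/CARD('d))) \<partial>M) \<le> ennreal (\<Prod>s\<in>UNIV. A s powr (1/CARD('d)))"
proof (cases "\<exists>s0. A s0 = 0")
  case True
  then obtain s0 where s0: "A s0 = 0" by blast
  have "(\<integral>\<^sup>+x. ennreal (h s0 x) \<partial>M) = 0" using le[of s0] s0 by simp
  then have "AE x in M. ennreal (h s0 x) = 0"
    by (subst (asm) nn_integral_0_iff_AE) (use meas in auto)
  then have "AE x in M. ennreal (\<Prod>s\<in>UNIV. h s x powr (1/CARD('d))) = 0"
  proof (rule eventually_mono)
    fix x assume "ennreal (h s0 x) = 0"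
    then have "h s0 x = 0" using nn[of s0 x] by simp
    then show "ennreal (\<Prod>s\<in>UNIV. h s x powr (1/CARD('d))) = 0"
      by (subst prod_zero) (auto intro!: bexI[of _ s0])
  qed
  then have "(\<integral>\<^sup>+x. ennreal (\<Prod>s\<in>UNIV. h s x powr (1/CARD('d))) \<partial>M) = 0"
    by (simp add: nn_integral_0_iff_AE[symmetric] nn_integral_cong_AE)
  then show ?thesis by simp
next
  case False
  then have Ap: "\<And>s. 0 < A s" using A by (metis less_eq_real_def)
  have Anz: "\<And>s. A s \<noteq> 0" using Ap by (metis less_irrefl)
  define n where "n = real CARD('d)"
  have n0: "n > 0" by (simp add: n_def)
  define P where "P = (\<Prod>s\<in>UNIV. A s powr (1/CARD('d)))"
  have P0: "P \<ge> 0" by (simp add: P_def prod_nonneg)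
  have pw: "(\<Prod>s\<in>UNIV. h s x powr (1/CARD('d))) \<le> P * (\<Sum>s\<in>UNIV. h s x / A s / n)" for x
  proof -
    have "(\<Prod>s\<in>UNIV. h s x powr (1/CARD('d))) = (\<Prod>s\<in>UNIV. A s powr (1/CARD('d)) * (h s x / A s) powr (1/CARD('d)))"
      by (rule prod.cong) (use Ap nn in \<open>auto simp: powr_mult[symmetric] less_imp_le Anz\<close>)
    also have "\<dots> = P * (\<Prod>s\<in>UNIV. h s x / A s) powr (1/CARD('d))"
      by (simp add: P_def prod.distrib prod_powr_distrib nn Ap less_imp_le)
    also have "\<dots> \<le> P * (\<Sum>s\<in>UNIV. h s x / A s / n)"
      using arith_geom_mean[of "UNIV::'d set" "\<lambda>s. h s x / A s"] nn Ap P0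
      by (intro mult_left_mono) (auto simp: n_def less_imp_le)
    finally show ?thesis .
  qed
  have "(\<integral>\<^sup>+x. ennreal (\<Prod>s\<in>UNIV. h s x powr (1/CARD('d))) \<partial>M)
      \<le> (\<integral>\<^sup>+x. ennreal (P * (\<Sum>s\<in>UNIV. h s x / A s / n)) \<partial>M)"
    by (rule nn_integral_mono) (use pw in \<open>simp add: ennreal_leI\<close>)
  also have "\<dots> = (\<integral>\<^sup>+x. ennreal P * (\<Sum>s\<in>UNIV. ennreal (1 / (A s * n)) * ennreal (h s x)) \<partial>M)"
  proof (rule nn_integral_cong)
    fix x
    have "(\<Sum>s\<in>UNIV. ennreal (1 / (A s * n)) * ennreal (h s x)) = (\<Sum>s\<in>UNIV. ennreal (h s x / A s / n))"
    proof (rule sum.cong[OF refl])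
      fix s
      have nn1: "1/(A s*n) \<ge> 0" using Ap[of s] n0 by simp
      have "ennreal (1 / (A s * n)) * ennreal (h s x) = ennreal (1/(A s*n) * h s x)"
        by (rule ennreal_mult[symmetric]) (use nn1 nn in auto)
      also have "1/(A s*n) * h s x = h s x / A s / n" by simp
      finally show "ennreal (1 / (A s * n)) * ennreal (h s x) = ennreal (h s x / A s / n)" .
    qed
    also have "\<dots> = ennreal (\<Sum>s\<in>UNIV. h s x / A s / n)"
      by (rule sum_ennreal) (use Ap n0 nn in \<open>auto intro!: divide_nonneg_pos mult_pos_pos\<close>)
    finally show "ennreal (P * (\<Sum>s\<in>UNIV. h s x / A s / n)) = ennreal P * (\<Sum>s\<in>UNIV. ennreal (1 / (A s * n)) * ennreal (h s x))"
      using P0 Ap n0 nn by (simp add: ennreal_mult sum_nonneg divide_nonneg_pos)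
  qed
  also have "\<dots> = ennreal P * (\<Sum>s\<in>UNIV. ennreal (1 / (A s * n)) * (\<integral>\<^sup>+x. ennreal (h s x) \<partial>M))"
    using meas by (simp add: nn_integral_cmult nn_integral_sum)
  also have "\<dots> \<le> ennreal P * (\<Sum>s\<in>UNIV. ennreal (1 / (A s * n)) * ennreal (A s))"
    by (intro mult_left_mono sum_mono le) auto
  also have "\<dots> = ennreal P * (\<Sum>s\<in>(UNIV::'d set). ennreal (1 / n))"
  proof -
    have "ennreal (1/(A s*n)) * ennreal (A s) = ennreal (1/n)" for s
    proof -
      have "ennreal (1/(A s*n)) * ennreal (A s) = ennreal (1/(A s*n) * A s)"
        by (rule ennreal_mult[symmetric]) (use Ap[of s] n0 in auto)
      also have "1/(A s*n) * A s = 1/n" using Anz[of s] by simp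
      finally show ?thesis .
    qed
    then show ?thesis by simp
  qed
  also have "\<dots> = ennreal P"
    using n0 by (simp add: n_def ennreal_of_nat_eq_real_of_nat ennreal_mult[symmetric])
  finally show ?thesis by (simp add: P_def)
qed


lemma Mmap_eq: "Mmap x l v = fst v + (2 * snd v) *\<^sub>R x l"
  unfolding Mmap_def by (vector algebra_simps)

lemma Lmap_eq: "Lmap x1 l v = fst v $ l + 2 * x1 $ l * snd v"
  unfolding Lmap_def by simp

lemma cont_meas1: "(\<lambda>v::(real^'d)\<times>real. fst v $ k + c * snd v) \<in> borel_measurable borel"
  by (rule borel_measurable_continuous_onI) (intro continuous_intros)

lemma cont_meas2: "(\<lambda>v::(real^'d)\<times>real. fst v + (c * snd v) *\<^sub>R y) \<in> borel \<rightarrow>\<^sub>M borel"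
  by (rule borel_measurable_continuous_onI) (intro continuous_intros)

lemma bl_finite:
  fixes x1 :: "real^'d" and x :: "'d \<Rightarrow> real^'d" and \<sigma> :: "'d \<Rightarrow> 'd"
  assumes bij: "bij \<sigma>" and ne: "\<And>s. x1 $ \<sigma> s \<noteq> x s $ \<sigma> s"
  shows "BL (Lmap x1) (\<lambda>_. 1/real CARD('d)) (Mmap x) (\<lambda>_. 1/real CARD('d)) < \<infinity>"
proof -
  define p where "p = 1/real CARD('d)"
  define c where "c s = 1 / \<bar>2*(x1 $ \<sigma> s - x s $ \<sigma> s)\<bar>" for s
  define K where "K = (\<Prod>s\<in>UNIV. c s powr p)"
  have c0: "c s \<ge> 0" for s by (simp add: c_def)
  have K0: "K \<ge> 0" by (simp add: K_def prod_nonneg)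
  have "ennreal K \<in> {C. \<forall>(f::'d \<Rightarrow> real \<Rightarrow> real) (g::'d \<Rightarrow> real^'d \<Rightarrow> real).
      (\<forall>i. f i \<in> borel_measurable lborel \<and> (\<forall>y. 0 \<le> f i y) \<and> integrable lborel (f i)) \<and>
      (\<forall>k. g k \<in> borel_measurable lborel \<and> (\<forall>y. 0 \<le> g k y) \<and> integrable lborel (g k)) \<longrightarrow>
      (\<integral>\<^sup>+ v. ennreal ((\<Prod>i\<in>UNIV. f i (Lmap x1 i v) powr p) * (\<Prod>k\<in>UNIV. g k (Mmap x k v) powr p)) \<partial>lborel)
        \<le> C * ennreal ((\<Prod>i\<in>UNIV. (\<integral>y. f i y \<partial>lborel) powr p) *
                        (\<Prod>k\<in>UNIV. (\<integral>y. g k y \<partial>lborel) powr p))}"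
  proof (safe)
    fix f :: "'d \<Rightarrow> real \<Rightarrow> real" and g :: "'d \<Rightarrow> real^'d \<Rightarrow> real"
    assume F: "\<forall>i. f i \<in> borel_measurable lborel \<and> (\<forall>y. 0 \<le> f i y) \<and> integrable lborel (f i)"
      and G: "\<forall>k. g k \<in> borel_measurable lborel \<and> (\<forall>y. 0 \<le> g k y) \<and> integrable lborel (g k)"
    have fm[measurable]: "f i \<in> borel_measurable borel" for i using F by simp
    have gm[measurable]: "g i \<in> borel_measurable borel" for i using G by simp
    have fn: "0 \<le> f i y" for i y using F by simp
    have gn: "0 \<le> g i y" for i y using G by simp
    define If where "If i = (\<integral>y. f i y \<partial>lborel)" for i
    define Ig where "Ig i = (\<integral>y. g i y \<partial>lborel)" for i
    have If0: "If i \<ge> 0" for i unfolding If_def by (rule integral_nonneg_AE) (simp add: fn)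
    have Ig0: "Ig i \<ge> 0" for i unfolding Ig_def by (rule integral_nonneg_AE) (simp add: gn)
    have fI: "(\<integral>\<^sup>+y. ennreal (f i y) \<partial>lborel) = ennreal (If i)" for i
      unfolding If_def by (rule nn_integral_eq_integral) (use F fn in auto)
    have gI: "(\<integral>\<^sup>+y. ennreal (g i y) \<partial>lborel) = ennreal (Ig i)" for i
      unfolding Ig_def by (rule nn_integral_eq_integral) (use G gn in auto)
    define h where "h s v = f (\<sigma> s) (Lmap x1 (\<sigma> s) v) * g s (Mmap x s v)" for s v
    have hm': "h s \<in> borel_measurable borel" for s
      unfolding h_def Lmap_eq Mmap_eq
      by (intro borel_measurable_times measurable_compose[OF cont_meas1 fm] measurable_compose[OF cont_meas2 gm])
    have hm: "h s \<in> borel_measurable lborel" for s using hm' by simp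
    have hn: "0 \<le> h s v" for s v unfolding h_def by (simp add: fn gn)
    have hI: "(\<integral>\<^sup>+v. ennreal (h s v) \<partial>lborel) \<le> ennreal (c s * If (\<sigma> s) * Ig s)" for s
    proof -
      have "(\<integral>\<^sup>+v. ennreal (h s v) \<partial>lborel) = ennreal (c s) * ennreal (If (\<sigma> s)) * ennreal (Ig s)"
        unfolding h_def Lmap_def Mmap_def c_def
        by (subst two_fun) (use ne fn gn in \<open>simp_all add: fI gI\<close>)
      also have "\<dots> = ennreal (c s * If (\<sigma> s) * Ig s)"
        using c0 If0 Ig0 by (simp add: ennreal_mult)
      finally show ?thesis by simp
    qed
    have gmi: "(\<integral>\<^sup>+v. ennreal (\<Prod>s\<in>UNIV. h s v powr (1/CARD('d))) \<partial>lborel)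
        \<le> ennreal (\<Prod>s\<in>UNIV. (c s * If (\<sigma> s) * Ig s) powr (1/CARD('d)))"
      by (rule gm_int[OF hm hn _ hI]) (simp add: c0 If0 Ig0)
    have integrand: "(\<Prod>i\<in>UNIV. f i (Lmap x1 i v) powr p) * (\<Prod>k\<in>UNIV. g k (Mmap x k v) powr p)
        = (\<Prod>s\<in>UNIV. h s v powr (1/CARD('d)))" for v
    proof -
      have "(\<Prod>i\<in>UNIV. f i (Lmap x1 i v) powr p) = (\<Prod>s\<in>UNIV. f (\<sigma> s) (Lmap x1 (\<sigma> s) v) powr p)"
        using prod.reindex[of \<sigma> UNIV "\<lambda>i. f i (Lmap x1 i v) powr p"] bij
        by (simp add: bij_def)
      then show ?thesis
        by (simp add: h_def powr_mult fn gn prod.distrib p_def)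
    qed
    have rhs: "(\<Prod>s\<in>UNIV. (c s * If (\<sigma> s) * Ig s) powr (1/CARD('d)))
        = K * ((\<Prod>i\<in>UNIV. If i powr p) * (\<Prod>k\<in>UNIV. Ig k powr p))"
    proof -
      have "(\<Prod>i\<in>UNIV. If i powr p) = (\<Prod>s\<in>UNIV. If (\<sigma> s) powr p)"
        using prod.reindex[of \<sigma> UNIV "\<lambda>i. If i powr p"] bij
        by (simp add: bij_def)
      then show ?thesis
        by (simp add: K_def powr_mult c0 If0 Ig0 prod.distrib p_def mult_ac)
    qed
    show "(\<integral>\<^sup>+ v. ennreal ((\<Prod>i\<in>UNIV. f i (Lmap x1 i v) powr p) * (\<Prod>k\<in>UNIV. g k (Mmap x k v) powr p)) \<partial>lborel)
        \<le> ennreal K * ennreal ((\<Prod>i\<in>UNIV. (\<integral>y. f i y \<partial>lborel) powr p) *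
                        (\<Prod>k\<in>UNIV. (\<integral>y. g k y \<partial>lborel) powr p))"
      using gmi unfolding integrand rhs If_def[symmetric] Ig_def[symmetric]
      by (simp add: ennreal_mult K0 prod_nonneg If0 Ig0)
  qed
  then have "BL (Lmap x1) (\<lambda>_. p) (Mmap x) (\<lambda>_. p) \<le> ennreal K"
    unfolding BL_def by (rule Inf_lower)
  then show ?thesis unfolding p_def infinity_ennreal_def
    using ennreal_less_top[of K] by (rule le_less_trans)
qed


lemma hall:
  fixes N :: "'a \<Rightarrow> 'b set" and I :: "'a set"
  assumes "finite I" "\<And>i. i\<in>I \<Longrightarrow> finite (N i)" "\<And>S. S \<subseteq> I \<Longrightarrow> card S \<le> card (\<Union>(N ` S))"
  shows "\<exists>\<sigma>. inj_on \<sigma> I \<and> (\<forall>i\<in>I. \<sigma> i \<in> N i)"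
  using assms
proof (induction "card I" arbitrary: I N rule: less_induct)
  case less
  note fin = less.prems(1) and finN = less.prems(2) and hc = less.prems(3)
  have finU: "finite (\<Union>(N ` S))" if "S \<subseteq> I" for S
    using that fin finN by (meson finite_UN finite_subset subsetD)
  show ?case
  proof (cases "I = {}")
    case True then show ?thesis by simp
  next
    case Ine: False
    show ?thesis
    proof (cases "\<exists>S. S \<subseteq> I \<and> S \<noteq> {} \<and> S \<noteq> I \<and> card (\<Union>(N ` S)) \<le> card S")
      case True
      then obtain S where S: "S \<subseteq> I" "S \<noteq> {}" "S \<noteq> I" "card (\<Union>(N ` S)) \<le> card S" by blast
      have finS: "finite S" using S fin finite_subset by blast
      have "card S < card I" using S fin by (meson psubset_card_mono psubsetI)
      then obtain \<sigma>1 where s1: "inj_on \<sigma>1 S" "\<forall>i\<in>S. \<sigma>1 i \<in> N i"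
        using less.hyps[of S N] finS finN hc S by (meson order_trans subsetD)
      define U where "U = \<Union>(N ` S)"
      define N' where "N' i = N i - U" for i
      have "card (I - S) < card I" using S fin
        by (metis Diff_subset card_seteq diff_card_le_card_Diff double_diff finite_Diff le_neq_implies_less subset_antisym subset_refl psubset_card_mono Diff_empty Diff_eq_empty_iff psubsetI card_Diff_subset)
      moreover have "\<forall>T\<subseteq>I - S. card T \<le> card (\<Union>(N' ` T))"
      proof (intro allI impI)
        fix T assume T: "T \<subseteq> I - S"
        have finT: "finite T" using T fin finite_subset by blast
        have dj: "T \<inter> S = {}" using T by blast
        have "card T + card S = card (T \<union> S)" using finT finS dj by (simp add: card_Un_disjoint)
        also have "\<dots> \<le> card (\<Union>(N ` (T \<union> S)))" using hc[of "T \<union> S"] T S by blast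
        also have "\<Union>(N ` (T \<union> S)) = \<Union>(N' ` T) \<union> U" by (auto simp: N'_def U_def)
        also have "card (\<Union>(N' ` T) \<union> U) = card (\<Union>(N' ` T)) + card U"
        proof (rule card_Un_disjoint)
          show "finite (\<Union>(N' ` T))" using finU[of T] T unfolding N'_def by (auto intro: finite_subset)
          show "finite U" using finU[of S] S by (simp add: U_def)
          show "\<Union>(N' ` T) \<inter> U = {}" by (auto simp: N'_def)
        qed
        finally show "card T \<le> card (\<Union>(N' ` T))" using S(4) by (simp add: U_def)
      qed
      ultimately obtain \<sigma>2 where s2: "inj_on \<sigma>2 (I - S)" "\<forall>i\<in>I - S. \<sigma>2 i \<in> N' i"
        using less.hyps[of "I - S" N'] fin finN by (auto simp: N'_def)
      define \<sigma> where "\<sigma> i = (if i \<in> S then \<sigma>1 i else \<sigma>2 i)" for i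
      have "inj_on \<sigma> I"
      proof (rule inj_onI)
        fix i j assume ij: "i \<in> I" "j \<in> I" "\<sigma> i = \<sigma> j"
        show "i = j"
        proof (cases "i \<in> S"; cases "j \<in> S")
          assume "i \<in> S" "j \<in> S" then show ?thesis using ij s1 by (auto simp: \<sigma>_def inj_on_def)
        next
          assume "i \<notin> S" "j \<notin> S" then show ?thesis using ij s2 by (auto simp: \<sigma>_def inj_on_def)
        next
          assume a: "i \<in> S" "j \<notin> S"
          then have "\<sigma> i \<in> U" using s1 by (auto simp: \<sigma>_def U_def)
          moreover have "\<sigma> j \<notin> U" using a s2 ij(2) by (auto simp: \<sigma>_def N'_def)
          ultimately show ?thesis using ij by simp
        next
          assume a: "i \<notin> S" "j \<in> S"
          then have "\<sigma> j \<in> U" using s1 by (auto simp: \<sigma>_def U_def)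
          moreover have "\<sigma> i \<notin> U" using a s2 ij(1) by (auto simp: \<sigma>_def N'_def)
          ultimately show ?thesis using ij by simp
        qed
      qed
      moreover have "\<forall>i\<in>I. \<sigma> i \<in> N i" using s1 s2 by (auto simp: \<sigma>_def N'_def)
      ultimately show ?thesis by blast
    next
      case False
      then have strict: "card S < card (\<Union>(N ` S))" if "S \<subseteq> I" "S \<noteq> {}" "S \<noteq> I" for S
        using that by (meson not_le)
      obtain i0 where i0: "i0 \<in> I" using Ine by blast
      have "card {i0} \<le> card (\<Union>(N ` {i0}))" using hc[of "{i0}"] i0 by blast
      then have "N i0 \<noteq> {}" by auto
      then obtain j0 where j0: "j0 \<in> N i0" by blast
      define N' where "N' i = N i - {j0}" for i
      have "card (I - {i0}) < card I" using i0 fin by (meson card_Diff1_less)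
      moreover have "\<forall>T\<subseteq>I - {i0}. card T \<le> card (\<Union>(N' ` T))"
      proof (intro allI impI)
        fix T assume T: "T \<subseteq> I - {i0}"
        show "card T \<le> card (\<Union>(N' ` T))"
        proof (cases "T = {}")
          case True then show ?thesis by simp
        next
          case False
          have "T \<noteq> I" using T i0 by blast
          then have "card T < card (\<Union>(N ` T))" using strict[of T] T False by blast
          moreover have "\<Union>(N' ` T) = \<Union>(N ` T) - {j0}" by (auto simp: N'_def)
          moreover have "card (\<Union>(N ` T)) - 1 \<le> card (\<Union>(N ` T) - {j0})"
            by (simp add: card_Diff_singleton_if)
          ultimately show ?thesis by simp
        qed
      qed
      ultimately obtain \<sigma>' where s': "inj_on \<sigma>' (I - {i0})" "\<forall>i\<in>I - {i0}. \<sigma>' i \<in> N' i"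
        using less.hyps[of "I - {i0}" N'] fin finN by (auto simp: N'_def)
      define \<sigma> where "\<sigma> = \<sigma>'(i0 := j0)"
      have "inj_on \<sigma> I"
      proof (rule inj_onI)
        fix i j assume ij: "i \<in> I" "j \<in> I" "\<sigma> i = \<sigma> j"
        have ne: "k \<in> I - {i0} \<Longrightarrow> \<sigma>' k \<noteq> j0" for k using s' by (auto simp: N'_def)
        show "i = j"
          using ij ne[of i] ne[of j] s'(1) unfolding \<sigma>_def inj_on_def
          by (cases "i = i0"; cases "j = i0") auto
      qed
      moreover have "\<forall>i\<in>I. \<sigma> i \<in> N i" using s' j0 by (auto simp: \<sigma>_def N'_def)
      ultimately show ?thesis by blast
    qed
  qed
qed


lemma emeasure_cbox_cart:
  fixes l u :: "real^'d"
  assumes "\<And>i. l$i \<le> u$i"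
  shows "emeasure lborel (cbox l u) = ennreal (\<Prod>i\<in>UNIV. u$i - l$i)"
proof -
  have ne: "cbox l u \<noteq> {}" using assms by (simp add: interval_ne_empty_cart(1) less_eq_vec_def)
  have "emeasure lborel (cbox l u) = ennreal (measure lborel (cbox l u))"
    by (rule emeasure_eq_ennreal_measure) (use emeasure_lborel_cbox_finite[of l u] in auto)
  also have "measure lborel (cbox l u) = (\<Prod>i\<in>UNIV. u$i - l$i)"
    using content_cbox_cart[OF ne] by simp
  finally show ?thesis .
qed

lemma snd_meas: "(snd :: (real^'d)\<times>real \<Rightarrow> real) \<in> borel \<rightarrow>\<^sub>M borel"
  by (rule borel_measurable_continuous_onI) (rule continuous_on_snd[OF continuous_on_id])

lemma fst_meas: "(fst :: (real^'d)\<times>real \<Rightarrow> real^'d) \<in> borel \<rightarrow>\<^sub>M borel"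
  by (rule borel_measurable_continuous_onI) (rule continuous_on_fst[OF continuous_on_id])

lemma ind_snd_meas: "(\<lambda>v::(real^'d)\<times>real. indicator {l..u::real} (snd v) :: ennreal) \<in> borel_measurable borel"
  by (rule measurable_compose[OF snd_meas]) simp

lemma seg_int:
  fixes B :: "(real^'d) set" and a :: "real^'d"
  assumes B[measurable]: "B \<in> sets borel"
  shows "(\<integral>\<^sup>+v. indicator {-1..1::real} (snd v) * indicator B (fst v + (2 * snd v) *\<^sub>R a) \<partial>lborel)
        = 2 * emeasure lborel B"
proof -
  have m: "(\<lambda>v::(real^'d)\<times>real. indicator B (fst v + (2 * snd v) *\<^sub>R a) :: ennreal) \<in> borel_measurable borel"
    by (rule measurable_compose[OF cont_meas2]) simp
  have m2: "(\<lambda>v::(real^'d)\<times>real. indicator {-1..1::real} (snd v) * indicator B (fst v + (2 * snd v) *\<^sub>R a) :: ennreal) \<in> borel_measurable (lborel \<Otimes>\<^sub>M lborel)"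
    using borel_measurable_times_ennreal[OF ind_snd_meas m] by (simp add: lborel_prod)
  have "(\<integral>\<^sup>+v. indicator {-1..1::real} (snd v) * indicator B (fst v + (2 * snd v) *\<^sub>R a) \<partial>lborel)
     = (\<integral>\<^sup>+v. indicator {-1..1::real} (snd v) * indicator B (fst v + (2 * snd v) *\<^sub>R a) \<partial>(lborel \<Otimes>\<^sub>M lborel))"
    by (simp only: lborel_prod)
  also have "\<dots> = (\<integral>\<^sup>+t. \<integral>\<^sup>+y. indicator {-1..1::real} t * indicator B (y + (2*t) *\<^sub>R a) \<partial>lborel \<partial>lborel)"
    by (subst lborel_pair.nn_integral_snd[symmetric, OF m2]) simp
  also have "\<dots> = (\<integral>\<^sup>+t. indicator {-1..1::real} t * emeasure lborel B \<partial>lborel)"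
  proof (rule nn_integral_cong)
    fix t :: real
    have "(\<integral>\<^sup>+y. indicator B (y + (2*t) *\<^sub>R a) \<partial>lborel) = (\<integral>\<^sup>+y. indicator B y \<partial>lborel)"
      by (rule nn_integral_lborel_shift) simp
    then show "(\<integral>\<^sup>+y. indicator {-1..1::real} t * indicator B (y + (2*t) *\<^sub>R a) \<partial>lborel) = indicator {-1..1::real} t * emeasure lborel B"
      by (subst nn_integral_cmult) auto
  qed
  also have "\<dots> = 2 * emeasure lborel B"
    by (subst nn_integral_multc) auto
  finally show ?thesis .
qed


definition Gf :: "(real^'d) set \<Rightarrow> real^'d \<Rightarrow> real^'d \<Rightarrow> real" where
  "Gf BT w u = enn2real (\<integral>\<^sup>+\<tau>. indicator {-1..1::real} \<tau> * indicator BT (u + (2 * \<tau>) *\<^sub>R (- w)) \<partial>lborel)"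

lemma Gf_inner_meas:
  fixes BT :: "(real^'d) set"
  assumes [measurable]: "BT \<in> sets borel"
  shows "(\<lambda>v::(real^'d)\<times>real. indicator {-1..1::real} (snd v) * indicator BT (fst v + (2 * snd v) *\<^sub>R (- w)) :: ennreal) \<in> borel_measurable borel"
proof -
  have m: "(\<lambda>v::(real^'d)\<times>real. indicator BT (fst v + (2 * snd v) *\<^sub>R (- w)) :: ennreal) \<in> borel_measurable borel"
    by (rule measurable_compose[OF cont_meas2]) simp
  show ?thesis using borel_measurable_times_ennreal[OF ind_snd_meas m] by simp
qed

lemma Gf_inner_le2:
  "(\<integral>\<^sup>+\<tau>. indicator {-1..1::real} \<tau> * indicator BT (u + (2 * \<tau>) *\<^sub>R (- w)) \<partial>lborel) \<le> 2"
proof -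
  have "(\<integral>\<^sup>+\<tau>. indicator {-1..1::real} \<tau> * indicator BT (u + (2 * \<tau>) *\<^sub>R (- w)) \<partial>lborel)
      \<le> (\<integral>\<^sup>+\<tau>. indicator {-1..1::real} \<tau> \<partial>lborel)"
    by (rule nn_integral_mono) (auto simp: indicator_def)
  also have "\<dots> = 2" by simp
  finally show ?thesis .
qed

lemma Gf_props:
  fixes l u w :: "real^'d"
  assumes lu: "\<And>i. l$i \<le> u$i"
  shows "Gf (cbox l u) w \<in> borel_measurable borel" and "\<And>y. 0 \<le> Gf (cbox l u) w y"
    and "integrable lborel (Gf (cbox l u) w)"
    and "(\<integral>y. Gf (cbox l u) w y \<partial>lborel) = 2 * (\<Prod>i\<in>UNIV. u$i - l$i)"
proof -
  let ?F = "\<lambda>v::(real^'d)\<times>real. indicator {-1..1::real} (snd v) * indicator (cbox l u) (fst v + (2 * snd v) *\<^sub>R (- w)) :: ennreal"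
  have Fm: "?F \<in> borel_measurable borel" by (rule Gf_inner_meas) simp
  have Fm2: "?F \<in> borel_measurable (lborel \<Otimes>\<^sub>M lborel)" using Fm by (simp add: lborel_prod)
  have inm: "(\<lambda>y. \<integral>\<^sup>+\<tau>. indicator {-1..1::real} \<tau> * indicator (cbox l u) (y + (2 * \<tau>) *\<^sub>R (- w)) \<partial>lborel) \<in> borel_measurable lborel"
    using lborel.borel_measurable_nn_integral[of "\<lambda>y \<tau>. ?F (y, \<tau>)" lborel] Fm2 by (simp add: case_prod_beta')
  show gm: "Gf (cbox l u) w \<in> borel_measurable borel"
    unfolding Gf_def[abs_def] using inm by simp
  show gn: "\<And>y. 0 \<le> Gf (cbox l u) w y" by (simp add: Gf_def)
  have fin: "(\<integral>\<^sup>+\<tau>. indicator {-1..1::real} \<tau> * indicator (cbox l u) (y + (2 * \<tau>) *\<^sub>R (- w)) \<partial>lborel) \<noteq> top" for y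
    using order_le_less_trans[OF Gf_inner_le2[of "cbox l u" y w], of top] by simp
  have "(\<integral>\<^sup>+y. ennreal (Gf (cbox l u) w y) \<partial>lborel)
      = (\<integral>\<^sup>+y. \<integral>\<^sup>+\<tau>. indicator {-1..1::real} \<tau> * indicator (cbox l u) (y + (2 * \<tau>) *\<^sub>R (- w)) \<partial>lborel \<partial>lborel)"
    by (rule nn_integral_cong) (use fin in \<open>simp add: Gf_def ennreal_enn2real_if\<close>)
  also have "\<dots> = (\<integral>\<^sup>+v. ?F v \<partial>(lborel \<Otimes>\<^sub>M lborel))"
    using lborel.nn_integral_fst[OF Fm2] by simp
  also have "\<dots> = (\<integral>\<^sup>+v. ?F v \<partial>lborel)" by (simp only: lborel_prod)
  also have "\<dots> = 2 * emeasure lborel (cbox l u)" by (rule seg_int) simp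
  also have "\<dots> = ennreal (2 * (\<Prod>i\<in>UNIV. u$i - l$i))"
    using lu by (simp add: emeasure_cbox_cart ennreal_mult prod_nonneg)
  finally have I: "(\<integral>\<^sup>+y. ennreal (Gf (cbox l u) w y) \<partial>lborel) = ennreal (2 * (\<Prod>i\<in>UNIV. u$i - l$i))" .
  show "integrable lborel (Gf (cbox l u) w)"
    by (rule integrableI_nonneg) (use gm gn I in auto)
  show "(\<integral>y. Gf (cbox l u) w y \<partial>lborel) = 2 * (\<Prod>i\<in>UNIV. u$i - l$i)"
    by (subst integral_eq_nn_integral) (use gm gn I lu in \<open>auto simp: prod_nonneg\<close>)
qed

lemma Gf_lower:
  fixes z w :: "real^'d"
  assumes eta: "0 < \<eta>" "\<eta> \<le> 1" and t: "\<bar>t\<bar> \<le> 1" and BT[measurable]: "BT \<in> sets borel"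
    and inBT: "\<And>\<tau>. \<bar>t - \<tau>\<bar> \<le> \<eta> \<Longrightarrow> z + (2 * (t - \<tau>)) *\<^sub>R w \<in> BT"
  shows "\<eta> \<le> Gf BT w (z + (2 * t) *\<^sub>R w)"
proof -
  define lo where "lo = (if t \<ge> 0 then t - \<eta> else t)"
  have "ennreal \<eta> = (\<integral>\<^sup>+\<tau>. indicator {lo..lo+\<eta>} \<tau> \<partial>lborel)"
    using eta by simp
  also have "\<dots> \<le> (\<integral>\<^sup>+\<tau>. indicator {-1..1::real} \<tau> * indicator BT (z + (2 * t) *\<^sub>R w + (2 * \<tau>) *\<^sub>R (- w)) \<partial>lborel)"
  proof (rule nn_integral_mono)
    fix \<tau> :: real
    show "indicator {lo..lo+\<eta>} \<tau> \<le> (indicator {-1..1::real} \<tau> * indicator BT (z + (2 * t) *\<^sub>R w + (2 * \<tau>) *\<^sub>R (- w)) :: ennreal)"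
    proof (cases "\<tau> \<in> {lo..lo+\<eta>}")
      case True
      then have "\<tau> \<in> {-1..1}" using t eta by (auto simp: lo_def split: if_splits)
      moreover have "\<bar>t - \<tau>\<bar> \<le> \<eta>" using True eta by (auto simp: lo_def split: if_splits)
      then have "z + (2 * t) *\<^sub>R w + (2 * \<tau>) *\<^sub>R (- w) \<in> BT"
        using inBT[of \<tau>] by (simp add: algebra_simps)
      ultimately show ?thesis by (simp add: indicator_def)
    qed (simp add: indicator_def)
  qed
  finally have le: "ennreal \<eta> \<le> (\<integral>\<^sup>+\<tau>. indicator {-1..1::real} \<tau> * indicator BT (z + (2 * t) *\<^sub>R w + (2 * \<tau>) *\<^sub>R (- w)) \<partial>lborel)" .
  have "(\<integral>\<^sup>+\<tau>. indicator {-1..1::real} \<tau> * indicator BT (z + (2 * t) *\<^sub>R w + (2 * \<tau>) *\<^sub>R (- w)) \<partial>lborel) < top"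
    using Gf_inner_le2 by (rule order_le_less_trans) simp
  from enn2real_mono[OF le this] show ?thesis using eta by (simp add: Gf_def)
qed


lemma prod_if_card:
  fixes u v :: real
  shows "(\<Prod>k\<in>(UNIV::'d::finite set). if k \<in> K then u else v) = u ^ card K * v ^ (CARD('d) - card K)"
proof -
  have "(\<Prod>k\<in>(UNIV::'d set). if k \<in> K then u else v) = (\<Prod>k\<in>UNIV \<inter> {k. k \<in> K}. u) * (\<Prod>k\<in>UNIV \<inter> - {k. k \<in> K}. v)"
    by (rule prod.If_cases) simp
  also have "\<dots> = u ^ card K * v ^ card (- K)" by simp
  also have "card (- K) = CARD('d) - card K" by (simp add: Compl_eq_Diff_UNIV card_Diff_subset)
  finally show ?thesis .
qed

lemma prod_powr_pow:
  fixes a :: "'d::finite \<Rightarrow> real"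
  assumes "\<And>i. 0 \<le> a i"
  shows "(\<Prod>i\<in>UNIV. a i powr (1/CARD('d))) ^ CARD('d) = (\<Prod>i\<in>UNIV. a i)"
proof -
  have "(\<Prod>i\<in>UNIV. a i powr (1/CARD('d))) ^ CARD('d) = (\<Prod>i\<in>UNIV. (a i powr (1/CARD('d))) ^ CARD('d))"
    by (simp add: prod_power_distrib)
  also have "\<dots> = (\<Prod>i\<in>UNIV. a i)"
  proof (rule prod.cong[OF refl])
    fix i
    show "(a i powr (1/CARD('d))) ^ CARD('d) = a i"
    proof (cases "a i = 0")
      case True then show ?thesis by simp
    next
      case False
      then have "(a i powr (1/CARD('d))) ^ CARD('d) = a i powr (real CARD('d) * (1/CARD('d)))"
        by (simp add: powr_power)
      also have "\<dots> = a i" using assms[of i] by simp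
      finally show ?thesis .
    qed
  qed
  finally show ?thesis .
qed

lemma delta_contra:
  fixes \<alpha> \<beta> :: real
  assumes "\<alpha> > 0" "\<beta> \<ge> 0" and H: "\<And>\<delta>. 0 < \<delta> \<Longrightarrow> \<delta> \<le> 1 \<Longrightarrow> \<alpha> * \<delta> ^ e \<le> \<beta> * \<delta> ^ (e + 1)"
  shows False
proof -
  define \<delta> where "\<delta> = min 1 (\<alpha> / (2 * (\<beta> + 1)))"
  have d0: "0 < \<delta>" using assms by (simp add: \<delta>_def)
  have d1: "\<delta> \<le> 1" by (simp add: \<delta>_def)
  have "\<alpha> * \<delta> ^ e \<le> (\<beta> * \<delta>) * \<delta> ^ e" using H[OF d0 d1] by (simp add: mult_ac)
  then have "\<alpha> \<le> \<beta> * \<delta>" using d0 by simp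
  also have "\<beta> * \<delta> \<le> \<beta> * (\<alpha> / (2 * (\<beta> + 1)))" using assms by (intro mult_left_mono) (auto simp: \<delta>_def)
  also have "\<dots> < \<alpha>"
  proof -
    have "\<beta> / (2 * (\<beta> + 1)) < 1" using assms by simp
    then have "\<alpha> * (\<beta> / (2 * (\<beta> + 1))) < \<alpha> * 1" using assms(1) by (rule mult_strict_left_mono)
    then show ?thesis by (simp add: mult.commute)
  qed
  finally show False by simp
qed

lemma BL_finD:
  fixes L :: "'i::finite \<Rightarrow> 'a::euclidean_space \<Rightarrow> 'b::euclidean_space" and M :: "'k::finite \<Rightarrow> 'a \<Rightarrow> 'c::euclidean_space"
  assumes "BL L p M q < \<infinity>"
  obtains c where "c \<ge> 0" "\<And>f g. (\<forall>i. f i \<in> borel_measurable lborel \<and> (\<forall>y. 0 \<le> f i y) \<and> integrable lborel (f i)) \<Longrightarrow>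
      (\<forall>k. g k \<in> borel_measurable lborel \<and> (\<forall>y. 0 \<le> g k y) \<and> integrable lborel (g k)) \<Longrightarrow>
      (\<integral>\<^sup>+ x. ennreal ((\<Prod>i\<in>UNIV. f i (L i x) powr p i) * (\<Prod>k\<in>UNIV. g k (M k x) powr q k)) \<partial>lborel)
        \<le> ennreal c * ennreal ((\<Prod>i\<in>UNIV. (\<integral>y. f i y \<partial>lborel) powr p i) *
                        (\<Prod>k\<in>UNIV. (\<integral>y. g k y \<partial>lborel) powr q k))"
proof -
  from assms obtain C where C: "C \<in> {C. \<forall>(f::'i \<Rightarrow> 'b \<Rightarrow> real) (g::'k \<Rightarrow> 'c \<Rightarrow> real).
      (\<forall>i. f i \<in> borel_measurable lborel \<and> (\<forall>y. 0 \<le> f i y) \<and> integrable lborel (f i)) \<and>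
      (\<forall>k. g k \<in> borel_measurable lborel \<and> (\<forall>y. 0 \<le> g k y) \<and> integrable lborel (g k)) \<longrightarrow>
      (\<integral>\<^sup>+ x. ennreal ((\<Prod>i\<in>UNIV. f i (L i x) powr p i) * (\<Prod>k\<in>UNIV. g k (M k x) powr q k)) \<partial>lborel)
        \<le> C * ennreal ((\<Prod>i\<in>UNIV. (\<integral>y. f i y \<partial>lborel) powr p i) *
                        (\<Prod>k\<in>UNIV. (\<integral>y. g k y \<partial>lborel) powr q k))}" and Cl: "C < top"
    unfolding BL_def infinity_ennreal_def Inf_less_iff by blast
  from Cl obtain c where "c \<ge> 0" "C = ennreal c" by (cases C) auto
  with C show ?thesis using that by blast
qed


lemma abs_tri_helper:
  fixes z s w r e W :: real
  assumes "\<bar>z\<bar> \<le> r" "\<bar>s\<bar> \<le> e" "\<bar>w\<bar> \<le> W"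
  shows "\<bar>z + 2 * s * w\<bar> \<le> r + 2 * e * W"
proof -
  have "\<bar>s * w\<bar> \<le> e * W" unfolding abs_mult using assms
    by (intro mult_mono) auto
  have "\<bar>2 * s * w\<bar> = 2 * \<bar>s * w\<bar>" by (simp add: abs_mult)
  moreover have "\<bar>z + 2 * s * w\<bar> \<le> \<bar>z\<bar> + \<bar>2 * s * w\<bar>" by (rule abs_triangle_ineq)
  ultimately show ?thesis using assms(1) \<open>\<bar>s * w\<bar> \<le> e * W\<close> by linarith
qed

lemma key_ineq:
  fixes a :: "real^'d" and x :: "'d \<Rightarrow> real^'d" and S K :: "'d set" and c W \<delta> :: real
  assumes zero: "\<And>s k. s \<in> S \<Longrightarrow> k \<notin> K \<Longrightarrow> x s $ k = a $ k"
   and Wle: "\<And>s k. \<bar>x s $ k - a $ k\<bar> \<le> W" and W0: "0 \<le> W"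
   and c: "c \<ge> 0"
   and cprop: "\<And>f g. (\<forall>i. f i \<in> borel_measurable lborel \<and> (\<forall>y. 0 \<le> f i y) \<and> integrable lborel (f i)) \<Longrightarrow>
      (\<forall>k. g k \<in> borel_measurable lborel \<and> (\<forall>y. 0 \<le> g k y) \<and> integrable lborel (g k)) \<Longrightarrow>
      (\<integral>\<^sup>+ v. ennreal ((\<Prod>i\<in>UNIV. f i (Lmap a i v) powr (1/real CARD('d))) * (\<Prod>k\<in>UNIV. g k (Mmap x k v) powr (1/real CARD('d)))) \<partial>lborel)
        \<le> ennreal c * ennreal ((\<Prod>i\<in>UNIV. (\<integral>y. f i y \<partial>lborel) powr (1/real CARD('d))) *
                        (\<Prod>k\<in>UNIV. (\<integral>y. g k y \<partial>lborel) powr (1/real CARD('d))))"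
   and \<delta>: "0 < \<delta>" "\<delta> \<le> 1"
  shows "(\<delta>/(1+2*W))^(CARD('d) - card S) * (2 * (2^card K * (2*\<delta>)^(CARD('d) - card K)))^CARD('d)
     \<le> c^CARD('d) * ((2^card K * (2*\<delta>)^(CARD('d) - card K)) * ((2*(1+2*W))^card K * (2*\<delta>)^(CARD('d) - card K))^card S
          * (2 * (4^card K * (4*\<delta>)^(CARD('d) - card K)))^(CARD('d) - card S))"
proof -
  define n where "n = CARD('d)"
  define p where "p = 1/real n"
  have p0: "p \<ge> 0" by (simp add: p_def)
  define \<Lambda> where "\<Lambda> = 1 + 2*W"
  have \<Lambda>1: "\<Lambda> \<ge> 1" using W0 by (simp add: \<Lambda>_def)
  define r0 where "r0 k = (if k \<in> K then 1 else \<delta>)" for k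
  define rS where "rS k = (if k \<in> K then \<Lambda> else \<delta>)" for k
  define rT where "rT k = (if k \<in> K then 2 else 2*\<delta>)" for k
  have r0p: "0 < r0 k" for k using \<delta> by (simp add: r0_def)
  have rSp: "0 < rS k" for k using \<delta> \<Lambda>1 by (simp add: rS_def)
  have rTp: "0 < rT k" for k using \<delta> by (simp add: rT_def)
  define v0 :: "real^'d" where "v0 = (\<chi> k. r0 k)"
  define vS :: "real^'d" where "vS = (\<chi> k. rS k)"
  define vT :: "real^'d" where "vT = (\<chi> k. rT k)"
  define B0 where "B0 = cbox (-v0) v0"
  define BS where "BS = cbox (-vS) vS"
  define BT where "BT = cbox (-vT) vT"
  define f :: "'d \<Rightarrow> real \<Rightarrow> real" where "f i = indicator {-r0 i..r0 i}" for i
  define g :: "'d \<Rightarrow> real^'d \<Rightarrow> real" where "g s = (if s \<in> S then indicator BS else Gf BT (x s - a))" for s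
  define \<eta> where "\<eta> = \<delta> / \<Lambda>"
  have \<eta>0: "0 < \<eta>" using \<delta> \<Lambda>1 by (simp add: \<eta>_def)
  have \<eta>1: "\<eta> \<le> 1" using \<delta> \<Lambda>1 by (simp add: \<eta>_def field_simps)
  have \<eta>W: "2 * \<eta> * W \<le> \<delta>"
  proof -
    have "2 * \<eta> * W = \<delta> * (2 * W / \<Lambda>)" by (simp add: \<eta>_def)
    also have "\<dots> \<le> \<delta> * 1" using \<delta> \<Lambda>1 W0 by (intro mult_left_mono) (auto simp: \<Lambda>_def field_simps)
    finally show ?thesis by simp
  qed
  define \<kappa> where "\<kappa> = (\<Prod>s\<in>UNIV. (if s \<in> S then 1 else \<eta>) powr p)"
  have \<kappa>0: "\<kappa> \<ge> 0" by (simp add: \<kappa>_def prod_nonneg)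
  define P0 where "P0 = (\<Prod>k\<in>UNIV. 2 * r0 k)"
  define cS where "cS = (\<Prod>k\<in>UNIV. 2 * rS k)"
  define cT where "cT = 2 * (\<Prod>k\<in>UNIV. 2 * rT k)"
  have P00: "P0 \<ge> 0" unfolding P0_def using r0p by (simp add: prod_nonneg less_imp_le)
  have cS0: "cS \<ge> 0" unfolding cS_def using rSp by (simp add: prod_nonneg less_imp_le)
  have cT0: "cT \<ge> 0" unfolding cT_def using rTp by (simp add: prod_nonneg less_imp_le)
  have mcbox: "measure lborel (cbox (-u) u) = (\<Prod>k\<in>UNIV. 2 * u$k)" if "\<And>k. 0 \<le> u$k" for u :: "real^'d"
  proof -
    have "emeasure lborel (cbox (-u) u) = ennreal (\<Prod>k\<in>UNIV. 2 * u$k)"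
      using that by (subst emeasure_cbox_cart) auto
    then show ?thesis using that by (simp add: measure_def prod_nonneg)
  qed
  have ecbox: "emeasure lborel (cbox (-u) u) = ennreal (\<Prod>k\<in>UNIV. 2 * u$k)" if "\<And>k. 0 \<le> u$k" for u :: "real^'d"
    using that by (subst emeasure_cbox_cart) auto
  have f_int: "(\<integral>y. f i y \<partial>lborel) = 2 * r0 i" for i
    using r0p[of i] by (simp add: f_def)
  have f_cond: "\<forall>i. f i \<in> borel_measurable lborel \<and> (\<forall>y. 0 \<le> f i y) \<and> integrable lborel (f i)"
    using r0p by (auto simp: f_def less_imp_le intro!: integrable_real_indicator)
  have g_int: "(\<integral>y. g s y \<partial>lborel) = (if s \<in> S then cS else cT)" for s
  proof (cases "s \<in> S")
    case True
    have "(\<integral>y. g s y \<partial>lborel) = measure lborel BS" using True by (simp add: g_def)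
    also have "\<dots> = cS" unfolding BS_def cS_def vS_def using rSp by (subst mcbox) (auto simp: less_imp_le)
    finally show ?thesis using True by simp
  next
    case False
    have "(\<integral>y. g s y \<partial>lborel) = 2 * (\<Prod>k\<in>UNIV. vT$k - (-vT)$k)"
      using False Gf_props(4)[of "-vT" vT "x s - a"] rTp by (simp add: g_def BT_def vT_def less_imp_le)
    also have "\<dots> = cT" by (simp add: cT_def vT_def)
    finally show ?thesis using False by simp
  qed
  have g_cond: "\<forall>k. g k \<in> borel_measurable lborel \<and> (\<forall>y. 0 \<le> g k y) \<and> integrable lborel (g k)"
  proof
    fix s
    show "g s \<in> borel_measurable lborel \<and> (\<forall>y. 0 \<le> g s y) \<and> integrable lborel (g s)"
    proof (cases "s \<in> S")
      case True
      have "emeasure lborel BS < \<infinity>" unfolding BS_def by (rule emeasure_lborel_cbox_finite)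
      then show ?thesis using True by (simp add: g_def BS_def)
    next
      case False
      have lu: "\<And>i. (-vT)$i \<le> vT$i" using rTp by (simp add: vT_def less_imp_le)
      show ?thesis using False Gf_props[OF lu, of "x s - a"] by (simp add: g_def BT_def)
    qed
  qed
  note UB = cprop[OF f_cond g_cond]
  define RHS where "RHS = (\<Prod>i\<in>UNIV. (\<integral>y. f i y \<partial>lborel) powr p) * (\<Prod>k\<in>UNIV. (\<integral>y. g k y \<partial>lborel) powr p)"
  have RHS_eq: "RHS = (\<Prod>i\<in>UNIV. (2 * r0 i) powr p) * (\<Prod>s\<in>UNIV. (if s \<in> S then cS else cT) powr p)"
    unfolding RHS_def f_int g_int by simp
  have pw: "indicator {-1..1::real} (snd v) * indicator B0 (fst v + (2 * snd v) *\<^sub>R a) * ennreal \<kappa>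
      \<le> ennreal ((\<Prod>i\<in>UNIV. f i (Lmap a i v) powr p) * (\<Prod>k\<in>UNIV. g k (Mmap x k v) powr p))" for v
  proof (cases "snd v \<in> {-1..1} \<and> fst v + (2 * snd v) *\<^sub>R a \<in> B0")
    case False
    then show ?thesis by (auto simp: indicator_def)
  next
    case True
    define t where "t = snd v"
    define z where "z = fst v + (2 * snd v) *\<^sub>R a"
    have t1: "\<bar>t\<bar> \<le> 1" using True by (auto simp: t_def)
    have zb0: "\<forall>i. - r0 i \<le> z $ i \<and> z $ i \<le> r0 i"
      using True unfolding z_def[symmetric] B0_def mem_box_cart v0_def by simp
    have zb: "\<bar>z $ k\<bar> \<le> r0 k" for k
      using zb0[rule_format, of k] by (simp add: abs_le_iff)
    have hf: "f i (Lmap a i v) = 1" for i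
    proof -
      have "Lmap a i v = z $ i" by (simp add: Lmap_def z_def t_def algebra_simps)
      then show ?thesis using zb[of i] by (simp add: f_def abs_le_iff)
    qed
    have Mz: "Mmap x s v = z + (2 * t) *\<^sub>R (x s - a)" for s
      by (simp add: Mmap_eq z_def t_def algebra_simps)
    have hg: "(if s \<in> S then 1 else \<eta>) \<le> g s (Mmap x s v)" for s
    proof (cases "s \<in> S")
      case True
      have "Mmap x s v \<in> BS"
        unfolding BS_def mem_box_cart vS_def
      proof (intro allI)
        fix k
        have "\<bar>(Mmap x s v) $ k\<bar> \<le> rS k"
        proof (cases "k \<in> K")
          case True
          have "\<bar>z$k + 2 * t * (x s $ k - a $ k)\<bar> \<le> r0 k + 2 * 1 * W"
            by (rule abs_tri_helper) (use zb t1 Wle in auto)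
          then show ?thesis using True by (simp add: Mz rS_def r0_def \<Lambda>_def)
        next
          case False
          then show ?thesis using zb[of k] zero[OF \<open>s \<in> S\<close> False] by (simp add: Mz rS_def r0_def)
        qed
        then show "(- (\<chi> k. rS k)) $ k \<le> Mmap x s v $ k \<and> Mmap x s v $ k \<le> (\<chi> k. rS k) $ k"
          by (simp add: abs_le_iff)
      qed
      then show ?thesis using True by (simp add: g_def)
    next
      case False
      have "\<eta> \<le> Gf BT (x s - a) (z + (2 * t) *\<^sub>R (x s - a))"
      proof (rule Gf_lower[OF \<eta>0 \<eta>1 t1])
        show "BT \<in> sets borel" by (simp add: BT_def)
        fix \<tau> assume tau: "\<bar>t - \<tau>\<bar> \<le> \<eta>"
        show "z + (2 * (t - \<tau>)) *\<^sub>R (x s - a) \<in> BT"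
          unfolding BT_def mem_box_cart vT_def
        proof (intro allI)
          fix k
          have "\<bar>z$k + 2 * (t - \<tau>) * (x s $ k - a $ k)\<bar> \<le> r0 k + 2 * \<eta> * W"
            by (rule abs_tri_helper) (use zb tau Wle in auto)
          also have "\<dots> \<le> rT k" using \<eta>W \<delta> by (simp add: r0_def rT_def)
          finally show "(- (\<chi> k. rT k)) $ k \<le> (z + (2 * (t - \<tau>)) *\<^sub>R (x s - a)) $ k \<and> (z + (2 * (t - \<tau>)) *\<^sub>R (x s - a)) $ k \<le> (\<chi> k. rT k) $ k"
            by (simp add: abs_le_iff)
        qed
      qed
      then show ?thesis using False by (simp add: g_def Mz)
    qed
    have "\<kappa> \<le> (\<Prod>k\<in>UNIV. g k (Mmap x k v) powr p)"
      unfolding \<kappa>_def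
    proof (rule prod_mono)
      fix s
      have nn: "0 \<le> (if s \<in> S then 1 else \<eta>)" using \<eta>0 by simp
      show "0 \<le> (if s \<in> S then 1 else \<eta>) powr p \<and> (if s \<in> S then 1 else \<eta>) powr p \<le> g s (Mmap x s v) powr p"
        using powr_mono2[OF p0 nn hg[of s]] by simp
    qed
    then have "\<kappa> \<le> (\<Prod>i\<in>UNIV. f i (Lmap a i v) powr p) * (\<Prod>k\<in>UNIV. g k (Mmap x k v) powr p)"
      by (simp add: hf)
    then show ?thesis using True by (simp add: ennreal_leI)
  qed
  have eB0: "emeasure lborel B0 = ennreal P0"
    unfolding B0_def P0_def using r0p by (subst ecbox) (auto simp: v0_def less_imp_le)
  have "ennreal (2 * P0 * \<kappa>) = (2 * emeasure lborel B0) * ennreal \<kappa>"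
    unfolding eB0 using P00 \<kappa>0 by (simp add: ennreal_mult)
  also have "\<dots> = (\<integral>\<^sup>+v. indicator {-1..1::real} (snd v) * indicator B0 (fst v + (2 * snd v) *\<^sub>R a) \<partial>lborel) * ennreal \<kappa>"
    by (subst seg_int) (auto simp: B0_def)
  also have "\<dots> = (\<integral>\<^sup>+v. indicator {-1..1::real} (snd v) * indicator B0 (fst v + (2 * snd v) *\<^sub>R a) * ennreal \<kappa> \<partial>lborel)"
  proof (rule nn_integral_multc[symmetric])
    have "(\<lambda>v::(real^'d)\<times>real. indicator {-1..1::real} (snd v) * indicator B0 (fst v + (2 * snd v) *\<^sub>R (- (- a))) :: ennreal) \<in> borel_measurable borel"
      by (rule Gf_inner_meas) (simp add: B0_def)
    then show "(\<lambda>v::(real^'d)\<times>real. indicator {-1..1::real} (snd v) * indicator B0 (fst v + (2 * snd v) *\<^sub>R a) :: ennreal) \<in> borel_measurable lborel"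
      by simp
  qed
  also have "\<dots> \<le> (\<integral>\<^sup>+v. ennreal ((\<Prod>i\<in>UNIV. f i (Lmap a i v) powr p) * (\<Prod>k\<in>UNIV. g k (Mmap x k v) powr p)) \<partial>lborel)"
    by (rule nn_integral_mono) (rule pw)
  also have "\<dots> \<le> ennreal c * ennreal RHS" using UB by (simp add: RHS_def p_def n_def)
  also have "\<dots> = ennreal (c * RHS)"
  proof -
    have RHS0: "RHS \<ge> 0" unfolding RHS_def by (simp add: prod_nonneg)
    show ?thesis by (rule ennreal_mult[symmetric]) (use c RHS0 in auto)
  qed
  finally have XY: "2 * P0 * \<kappa> \<le> c * RHS"
    using c by (subst (asm) ennreal_le_iff) (auto simp: RHS_def prod_nonneg intro!: mult_nonneg_nonneg)
  have "(2 * P0 * \<kappa>) ^ n \<le> (c * RHS) ^ n"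
    by (rule power_mono[OF XY]) (use P00 \<kappa>0 in simp)
  also have "(c * RHS) ^ n = c ^ n * (P0 * (cS ^ card S * cT ^ (n - card S)))"
  proof -
    have "RHS ^ n = (\<Prod>i\<in>UNIV. 2 * r0 i) * (\<Prod>s\<in>UNIV. (if s \<in> S then cS else cT))"
      unfolding RHS_eq power_mult_distrib p_def n_def
      by (subst prod_powr_pow, use r0p in \<open>simp add: less_imp_le\<close>)+ (use cS0 cT0 in \<open>auto\<close>)
    also have "(\<Prod>s\<in>UNIV. (if s \<in> S then cS else cT)) = cS ^ card S * cT ^ (n - card S)"
      by (simp add: prod_if_card n_def)
    finally show ?thesis by (simp add: power_mult_distrib P0_def)
  qed
  also have "(2 * P0 * \<kappa>) ^ n = \<eta> ^ (n - card S) * (2 * P0) ^ n"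
  proof -
    have "\<kappa> ^ n = (\<Prod>s\<in>UNIV. (if s \<in> S then 1 else \<eta>))"
      unfolding \<kappa>_def p_def n_def by (rule prod_powr_pow) (use \<eta>0 in auto)
    also have "\<dots> = \<eta> ^ (n - card S)" by (simp add: prod_if_card n_def)
    finally show ?thesis by (simp add: power_mult_distrib)
  qed
  finally have fin: "\<eta> ^ (n - card S) * (2 * P0) ^ n \<le> c ^ n * (P0 * (cS ^ card S * cT ^ (n - card S)))" .
  have P0e: "P0 = 2^card K * (2*\<delta>)^(CARD('d) - card K)"
    unfolding P0_def r0_def by (simp add: if_distrib prod_if_card)
  have cSe: "cS = (2*(1+2*W))^card K * (2*\<delta>)^(CARD('d) - card K)"
    unfolding cS_def rS_def by (simp add: if_distrib prod_if_card \<Lambda>_def)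
  have cTe: "cT = 2 * (4^card K * (4*\<delta>)^(CARD('d) - card K))"
    unfolding cT_def rT_def by (simp add: if_distrib prod_if_card)
  show ?thesis using fin unfolding P0e cSe cTe \<eta>_def \<Lambda>_def n_def by (simp add: mult_ac)
qed


lemma pow_alg1:
  fixes \<delta> L :: real and q m n k :: nat
  shows "(\<delta>/L)^q * (2 * (2^k * (2*\<delta>)^m))^n = ((1/L)^q * (2 * 2^k * 2^m)^n) * \<delta>^(q + m*n)"
proof -
  have e1: "(\<delta>/L)^q = (1/L)^q * \<delta>^q" by (simp add: power_divide)
  have e2: "2 * (2^k * (2*\<delta>)^m) = (2 * 2^k * 2^m) * \<delta>^m" by (simp add: power_mult_distrib)
  have e3: "((2 * 2^k * 2^m) * \<delta>^m)^n = (2*2^k*2^m)^n * \<delta>^(m*n)" by (simp only: power_mult_distrib power_mult)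
  show ?thesis unfolding e1 e2 e3 power_add by (simp only: ac_simps)
qed

lemma pow_alg2:
  fixes \<delta> c A :: real and q m n k s :: nat
  assumes "s + q = n"
  shows "c^n * ((2^k * (2*\<delta>)^m) * (A * (2*\<delta>)^m)^s * (2 * (4^k * (4*\<delta>)^m))^q)
     = (c^n * (2^k * 2^m) * (A * 2^m)^s * (2 * 4^k * 4^m)^q) * \<delta>^(m + m*n)"
proof -
  have d: "\<delta>^(m + m*n) = \<delta>^m * ((\<delta>^m)^s * (\<delta>^m)^q)"
    unfolding assms[symmetric] by (simp only: power_add power_mult add_mult_distrib2)
  have e1: "(2*\<delta>)^m = 2^m * \<delta>^m" by (simp only: power_mult_distrib)
  have e2: "(4*\<delta>)^m = 4^m * \<delta>^m" by (simp only: power_mult_distrib)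
  show ?thesis unfolding d e1 e2 power_mult_distrib by (simp only: ac_simps)
qed

lemma BL_finD2:
  fixes L :: "'i::finite \<Rightarrow> 'a::euclidean_space \<Rightarrow> 'b::euclidean_space" and M :: "'k::finite \<Rightarrow> 'a \<Rightarrow> 'c::euclidean_space"
  assumes "BL L p M q < \<infinity>"
  shows "\<exists>c\<ge>0. \<forall>f g. (\<forall>i. f i \<in> borel_measurable lborel \<and> (\<forall>y. 0 \<le> f i y) \<and> integrable lborel (f i)) \<longrightarrow>
      (\<forall>k. g k \<in> borel_measurable lborel \<and> (\<forall>y. 0 \<le> g k y) \<and> integrable lborel (g k)) \<longrightarrow>
      (\<integral>\<^sup>+ x. ennreal ((\<Prod>i\<in>UNIV. f i (L i x) powr p i) * (\<Prod>k\<in>UNIV. g k (M k x) powr q k)) \<partial>lborel)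
        \<le> ennreal c * ennreal ((\<Prod>i\<in>UNIV. (\<integral>y. f i y \<partial>lborel) powr p i) *
                        (\<Prod>k\<in>UNIV. (\<integral>y. g k y \<partial>lborel) powr q k))"
proof -
  from assms obtain C where C: "C \<in> {C. \<forall>(f::'i \<Rightarrow> 'b \<Rightarrow> real) (g::'k \<Rightarrow> 'c \<Rightarrow> real).
      (\<forall>i. f i \<in> borel_measurable lborel \<and> (\<forall>y. 0 \<le> f i y) \<and> integrable lborel (f i)) \<and>
      (\<forall>k. g k \<in> borel_measurable lborel \<and> (\<forall>y. 0 \<le> g k y) \<and> integrable lborel (g k)) \<longrightarrow>
      (\<integral>\<^sup>+ x. ennreal ((\<Prod>i\<in>UNIV. f i (L i x) powr p i) * (\<Prod>k\<in>UNIV. g k (M k x) powr q k)) \<partial>lborel)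
        \<le> C * ennreal ((\<Prod>i\<in>UNIV. (\<integral>y. f i y \<partial>lborel) powr p i) *
                        (\<Prod>k\<in>UNIV. (\<integral>y. g k y \<partial>lborel) powr q k))}" and Cl: "C < top"
    unfolding BL_def infinity_ennreal_def Inf_less_iff by blast
  from Cl obtain c where c: "c \<ge> 0" "C = ennreal c" by (cases C) auto
  show ?thesis
    by (rule exI[of _ c]) (use C c in simp)
qed

lemma bl_infinite:
  fixes a :: "real^'d" and x :: "'d \<Rightarrow> real^'d" and S K :: "'d set"
  assumes cKS: "card K < card S" and zero: "\<And>s k. s \<in> S \<Longrightarrow> k \<notin> K \<Longrightarrow> x s $ k = a $ k"
  shows "\<not> BL (Lmap a) (\<lambda>_. 1/real CARD('d)) (Mmap x) (\<lambda>_. 1/real CARD('d)) < \<infinity>"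
proof
  assume fin: "BL (Lmap a) (\<lambda>_. 1/real CARD('d)) (Mmap x) (\<lambda>_. 1/real CARD('d)) < \<infinity>"
  from BL_finD2[OF fin] obtain c where c: "c \<ge> 0" and cp: "\<forall>f g. (\<forall>i. f i \<in> borel_measurable lborel \<and> (\<forall>y. 0 \<le> f i y) \<and> integrable lborel (f i)) \<longrightarrow>
      (\<forall>k. g k \<in> borel_measurable lborel \<and> (\<forall>y. 0 \<le> g k y) \<and> integrable lborel (g k)) \<longrightarrow>
      (\<integral>\<^sup>+ v. ennreal ((\<Prod>i\<in>UNIV. f i (Lmap a i v) powr (1/real CARD('d))) * (\<Prod>k\<in>UNIV. g k (Mmap x k v) powr (1/real CARD('d)))) \<partial>lborel)
        \<le> ennreal c * ennreal ((\<Prod>i\<in>UNIV. (\<integral>y. f i y \<partial>lborel) powr (1/real CARD('d))) *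
                        (\<Prod>k\<in>UNIV. (\<integral>y. g k y \<partial>lborel) powr (1/real CARD('d))))"
    by (elim exE conjE)
  note cprop = cp[THEN spec, THEN spec, THEN mp, THEN mp]
  define n where "n = CARD('d)"
  define W where "W = (\<Sum>s\<in>UNIV. \<Sum>k\<in>UNIV. \<bar>x s $ k - a $ k\<bar>)"
  have Wle: "\<bar>x s $ k - a $ k\<bar> \<le> W" for s k
  proof -
    have "\<bar>x s $ k - a $ k\<bar> \<le> (\<Sum>k\<in>UNIV. \<bar>x s $ k - a $ k\<bar>)"
      by (rule member_le_sum) auto
    also have "\<dots> \<le> W" unfolding W_def
      by (rule member_le_sum[of s UNIV "\<lambda>s. \<Sum>k\<in>UNIV. \<bar>x s $ k - a $ k\<bar>"]) (auto intro: sum_nonneg)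
    finally show ?thesis .
  qed
  have W0: "0 \<le> W" unfolding W_def by (intro sum_nonneg) auto
  define L where "L = 1 + 2*W"
  have L1: "L \<ge> 1" using W0 by (simp add: L_def)
  have sn: "card S \<le> n" unfolding n_def by (rule card_mono) auto
  define m where "m = n - card K"
  define q where "q = n - card S"
  have qm: "q + 1 \<le> m" using cKS sn by (simp add: q_def m_def)
  have sq: "card S + q = n" using sn by (simp add: q_def)
  define \<alpha> where "\<alpha> = (1/L)^q * (2 * 2^card K * 2^m)^n"
  define \<beta> where "\<beta> = c^n * (2^card K * 2^m) * ((2*L)^card K * 2^m)^card S * (2 * 4^card K * 4^m)^q"
  have \<alpha>0: "\<alpha> > 0" unfolding \<alpha>_def using L1 by (intro mult_pos_pos zero_less_power) auto
  have \<beta>0: "\<beta> \<ge> 0" unfolding \<beta>_def using L1 c by (intro mult_nonneg_nonneg zero_le_power) auto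
  have H: "\<alpha> * \<delta> ^ (m - 1 + m*n) \<le> \<beta> * \<delta> ^ (m - 1 + m*n + 1)" if \<delta>: "0 < \<delta>" "\<delta> \<le> 1" for \<delta>
  proof -
    have ki: "(\<delta>/L)^q * (2 * (2^card K * (2*\<delta>)^m))^n
     \<le> c^n * ((2^card K * (2*\<delta>)^m) * ((2*L)^card K * (2*\<delta>)^m)^card S
          * (2 * (4^card K * (4*\<delta>)^m))^q)"
      unfolding L_def m_def q_def n_def by (rule key_ineq[OF zero Wle W0 c cprop \<delta>])
    have "\<alpha> * \<delta> ^ (m - 1 + m*n) \<le> \<alpha> * \<delta> ^ (q + m*n)"
      using \<alpha>0 \<delta> qm by (intro mult_left_mono power_decreasing) auto
    also have "\<dots> = (\<delta>/L)^q * (2 * (2^card K * (2*\<delta>)^m))^n"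
      unfolding \<alpha>_def by (rule pow_alg1[symmetric])
    also have "\<dots> \<le> c^n * ((2^card K * (2*\<delta>)^m) * ((2*L)^card K * (2*\<delta>)^m)^card S
          * (2 * (4^card K * (4*\<delta>)^m))^q)" by (rule ki)
    also have "\<dots> = \<beta> * \<delta>^(m + m*n)"
      unfolding \<beta>_def by (rule pow_alg2[OF sq])
    also have "m + m*n = m - 1 + m*n + 1" using qm by simp
    finally show ?thesis .
  qed
  show False by (rule delta_contra[OF \<alpha>0 \<beta>0 H])
qed


lemma pointwise_sigma:
  fixes x1 :: "real^'d" and x :: "'d \<Rightarrow> real^'d"
  assumes fin: "BL (Lmap x1) (\<lambda>_. 1/real CARD('d)) (Mmap x) (\<lambda>_. 1/real CARD('d)) < \<infinity>"
  shows "\<exists>\<sigma>. bij \<sigma> \<and> (\<forall>s. x1 $ \<sigma> s \<noteq> x s $ \<sigma> s)"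
proof -
  define N where "N s = {k. x s $ k \<noteq> x1 $ k}" for s
  show ?thesis
  proof (cases "\<forall>S. S \<subseteq> (UNIV::'d set) \<longrightarrow> card S \<le> card (\<Union>(N ` S))")
    case True
    have "\<exists>\<sigma>. inj_on \<sigma> (UNIV::'d set) \<and> (\<forall>i\<in>UNIV. \<sigma> i \<in> N i)"
      by (rule hall) (use True in simp_all)
    then obtain \<sigma> where s1: "inj \<sigma>" and s2: "\<And>i. \<sigma> i \<in> N i" by blast
    have "bij \<sigma>" using s1 by (simp add: bij_def finite_UNIV_inj_surj)
    moreover have "\<forall>s. x1 $ \<sigma> s \<noteq> x s $ \<sigma> s"
    proof
      fix s
      have "x s $ \<sigma> s \<noteq> x1 $ \<sigma> s" using s2[of s] by (simp add: N_def)
      then show "x1 $ \<sigma> s \<noteq> x s $ \<sigma> s" by (rule not_sym)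
    qed
    ultimately show ?thesis by blast
  next
    case False
    then obtain S where S: "card (\<Union>(N ` S)) < card S" by (auto simp: not_le)
    define K where "K = \<Union>(N ` S)"
    have cK: "card K < card S" using S by (simp add: K_def)
    have z: "x s $ k = x1 $ k" if "s \<in> S" "k \<notin> K" for s k
      using that by (auto simp: K_def N_def)
    have "\<not> BL (Lmap x1) (\<lambda>_. 1/real CARD('d)) (Mmap x) (\<lambda>_. 1/real CARD('d)) < \<infinity>"
      by (rule bl_infinite[OF cK z])
    with fin show ?thesis by simp
  qed
qed


definition gpt :: "real^'d \<Rightarrow> real^'d \<Rightarrow> nat \<Rightarrow> ('d \<Rightarrow> nat) \<Rightarrow> real^'d" where
  "gpt a b N j = (\<chi> i. a$i + (b$i - a$i) * real (j i) / real N)"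

definition grid :: "real^'d \<Rightarrow> real^'d \<Rightarrow> nat \<Rightarrow> (real^'d) set set" where
  "grid a b N = (\<lambda>j. cbox (gpt a b N j) (gpt a b N (\<lambda>i. Suc (j i)))) ` {j. \<forall>i. j i < N}"

lemma gpt_mono:
  assumes "a$i \<le> b$i" "j i \<le> j' i"
  shows "gpt a b N j $ i \<le> gpt a b N j' $ i"
proof -
  have "(b$i - a$i) * real (j i) \<le> (b$i - a$i) * real (j' i)"
    using assms by (intro mult_left_mono) auto
  then show ?thesis by (simp add: gpt_def divide_right_mono)
qed

lemma grid_finite:
  fixes a b :: "real^'d"
  shows "finite (grid a b N)"
proof -
  have "{j::'d \<Rightarrow> nat. \<forall>i. j i < N} = Pi\<^sub>E UNIV (\<lambda>_. {..<N})"
    by (auto simp: PiE_UNIV_domain Pi_def)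
  moreover have "finite (Pi\<^sub>E (UNIV::'d set) (\<lambda>_. {..<N}))" by (rule finite_PiE) auto
  ultimately have "finite {j::'d \<Rightarrow> nat. \<forall>i. j i < N}" by simp
  then show ?thesis by (simp add: grid_def)
qed

lemma grid_partition:
  fixes a b :: "real^'d"
  assumes ab: "\<And>i. a$i \<le> b$i" and N: "N > 0"
  shows "cube_partition (cbox a b) (grid a b N)"
  unfolding cube_partition_def
proof (intro conjI)
  show "finite (grid a b N)" by (rule grid_finite)
  show "\<forall>R\<in>grid a b N. is_cube R \<and> R \<subseteq> cbox a b"
  proof
    fix R assume "R \<in> grid a b N"
    then obtain j where j: "\<forall>i. j i < N" and R: "R = cbox (gpt a b N j) (gpt a b N (\<lambda>i. Suc (j i)))"
      by (auto simp: grid_def)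
    have mono: "\<And>i. gpt a b N j $ i \<le> gpt a b N (\<lambda>i. Suc (j i)) $ i"
      by (rule gpt_mono) (use ab in auto)
    have c: "is_cube R" unfolding is_cube_def R using mono by blast
    have lo: "a$i \<le> gpt a b N j $ i" for i
      using ab[of i] N by (simp add: gpt_def)
    have hi: "gpt a b N (\<lambda>i. Suc (j i)) $ i \<le> b$i" for i
    proof -
      have "real (Suc (j i)) \<le> real N" using j[rule_format, of i] by simp
      then have "(b$i - a$i) * real (Suc (j i)) \<le> (b$i - a$i) * real N"
        using ab[of i] by (intro mult_left_mono) auto
      then have "(b$i - a$i) * real (Suc (j i)) / real N \<le> b$i - a$i"
        using N by (simp add: divide_le_eq)
      then show ?thesis by (simp add: gpt_def)
    qed
    have "R \<subseteq> cbox a b" unfolding R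
      by (rule subsetI) (auto simp: mem_box_cart intro: order_trans[OF lo] order_trans[OF _ hi])
    with c show "is_cube R \<and> R \<subseteq> cbox a b" by simp
  qed
  show "\<Union>(grid a b N) = cbox a b"
  proof
    show "\<Union>(grid a b N) \<subseteq> cbox a b"
      using \<open>\<forall>R\<in>grid a b N. is_cube R \<and> R \<subseteq> cbox a b\<close> by blast
    show "cbox a b \<subseteq> \<Union>(grid a b N)"
    proof
      fix y assume y: "y \<in> cbox a b"
      define j where "j i = (if b$i = a$i then 0 else min (N - 1) (nat \<lfloor>(y$i - a$i) * real N / (b$i - a$i)\<rfloor>))" for i
      have jN: "\<forall>i. j i < N" using N by (auto simp: j_def)
      have "y \<in> cbox (gpt a b N j) (gpt a b N (\<lambda>i. Suc (j i)))"
        unfolding mem_box_cart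
      proof (intro allI)
        fix i
        have yi: "a$i \<le> y$i" "y$i \<le> b$i" using y by (auto simp: mem_box_cart)
        show "gpt a b N j $ i \<le> y $ i \<and> y $ i \<le> gpt a b N (\<lambda>i. Suc (j i)) $ i"
        proof (cases "b$i = a$i")
          case True
          then show ?thesis using yi by (simp add: gpt_def j_def)
        next
          case False
          then have d: "b$i - a$i > 0" using ab[of i] by simp
          define u where "u = (y$i - a$i) * real N / (b$i - a$i)"
          have u0: "0 \<le> u" using yi d by (simp add: u_def)
          have "(y$i - a$i) * real N \<le> (b$i - a$i) * real N"
            using yi by (intro mult_right_mono) auto
          then have uN: "u \<le> real N" using d by (simp add: u_def pos_divide_le_eq mult.commute)
          have ji: "j i = min (N - 1) (nat \<lfloor>u\<rfloor>)" using False by (simp add: j_def u_def)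
          have fl0: "real (nat \<lfloor>u\<rfloor>) = real_of_int \<lfloor>u\<rfloor>" using u0 by simp
          have fl1: "real_of_int \<lfloor>u\<rfloor> \<le> u" by (rule of_int_floor_le)
          have fl2: "u < real_of_int \<lfloor>u\<rfloor> + 1" by (rule real_of_int_floor_add_one_gt)
          have "j i \<le> nat \<lfloor>u\<rfloor>" using ji by simp
          then have "real (j i) \<le> real (nat \<lfloor>u\<rfloor>)" by (rule of_nat_mono)
          then have j_le: "real (j i) \<le> u" using fl0 fl1 by linarith
          have u_le: "u \<le> real (Suc (j i))"
          proof (cases "nat \<lfloor>u\<rfloor> \<le> N - 1")
            case True
            then have "j i = nat \<lfloor>u\<rfloor>" using ji by simp
            then have "real (Suc (j i)) = real_of_int \<lfloor>u\<rfloor> + 1" using fl0 by simp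
            then show ?thesis using fl2 by linarith
          next
            case False
            then have "j i = N - 1" using ji by simp
            then show ?thesis using uN N by simp
          qed
          have yeq: "y$i = a$i + (b$i - a$i) * u / real N" using d N by (simp add: u_def field_simps)
          have "(b$i - a$i) * real (j i) / real N \<le> (b$i - a$i) * u / real N"
            using j_le d N by (intro divide_right_mono mult_left_mono) auto
          moreover have "(b$i - a$i) * u / real N \<le> (b$i - a$i) * real (Suc (j i)) / real N"
            using u_le d N by (intro divide_right_mono mult_left_mono) auto
          ultimately show ?thesis by (simp add: gpt_def yeq)
        qed
      qed
      then show "y \<in> \<Union>(grid a b N)" using jN by (auto simp: grid_def)
    qed
  qed
  show "\<forall>R\<in>grid a b N. \<forall>R'\<in>grid a b N. R \<noteq> R' \<longrightarrow> interior R \<inter> interior R' = {}"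
  proof (intro ballI impI)
    fix R R' assume "R \<in> grid a b N" "R' \<in> grid a b N" "R \<noteq> R'"
    then obtain j j' where R: "R = cbox (gpt a b N j) (gpt a b N (\<lambda>i. Suc (j i)))"
      and R': "R' = cbox (gpt a b N j') (gpt a b N (\<lambda>i. Suc (j' i)))" and ne: "j \<noteq> j'"
      by (auto simp: grid_def)
    obtain i where i: "j i \<noteq> j' i" using ne by auto
    show "interior R \<inter> interior R' = {}"
    proof (rule ccontr)
      assume "interior R \<inter> interior R' \<noteq> {}"
      then obtain z where z: "z \<in> box (gpt a b N j) (gpt a b N (\<lambda>i. Suc (j i)))"
        "z \<in> box (gpt a b N j') (gpt a b N (\<lambda>i. Suc (j' i)))"
        unfolding R R' by auto
      have z1: "gpt a b N j $ i < z$i" "z$i < gpt a b N (\<lambda>i. Suc (j i)) $ i" using z(1) by (auto simp: mem_box_cart)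
      have z2: "gpt a b N j' $ i < z$i" "z$i < gpt a b N (\<lambda>i. Suc (j' i)) $ i" using z(2) by (auto simp: mem_box_cart)
      show False
      proof (cases "j i < j' i")
        case True
        have "gpt a b N (\<lambda>i. Suc (j i)) $ i \<le> gpt a b N j' $ i"
          by (rule gpt_mono) (use ab True in auto)
        then show False using z1 z2 by simp
      next
        case False
        then have "j' i < j i" using i by simp
        have "gpt a b N (\<lambda>i. Suc (j' i)) $ i \<le> gpt a b N j $ i"
          by (rule gpt_mono) (use ab \<open>j' i < j i\<close> in auto)
        then show False using z1 z2 by simp
      qed
    qed
  qed
qed

lemma grid_small:
  fixes a b :: "real^'d"
  assumes ab: "\<And>i. a$i \<le> b$i" and N: "N > 0" and R: "R \<in> grid a b N" and y: "y \<in> R" "y' \<in> R"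
  shows "dist y y' \<le> (\<Sum>i\<in>UNIV. b$i - a$i) / real N"
proof -
  obtain j where Rj: "R = cbox (gpt a b N j) (gpt a b N (\<lambda>i. Suc (j i)))" using R by (auto simp: grid_def)
  have c: "\<bar>(y - y')$i\<bar> \<le> (b$i - a$i) / real N" for i
  proof -
    have "gpt a b N (\<lambda>i. Suc (j i)) $ i - gpt a b N j $ i = (b$i - a$i) / real N"
      using N by (simp add: gpt_def field_simps)
    moreover have "gpt a b N j $ i \<le> y$i" "y$i \<le> gpt a b N (\<lambda>i. Suc (j i)) $ i"
      "gpt a b N j $ i \<le> y'$i" "y'$i \<le> gpt a b N (\<lambda>i. Suc (j i)) $ i"
      using y unfolding Rj by (auto simp: mem_box_cart)
    ultimately show ?thesis by (simp add: abs_le_iff)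
  qed
  have "dist y y' = norm (y - y')" by (simp add: dist_norm)
  also have "\<dots> \<le> (\<Sum>i\<in>UNIV. \<bar>(y - y')$i\<bar>)" by (rule norm_le_l1_cart)
  also have "\<dots> \<le> (\<Sum>i\<in>UNIV. (b$i - a$i) / real N)" by (rule sum_mono) (rule c)
  also have "\<dots> = (\<Sum>i\<in>UNIV. b$i - a$i) / real N" by (simp add: sum_divide_distrib)
  finally show ?thesis .
qed


lemma mem_cbox_vecvec:
  fixes A B y :: "('a::euclidean_space)^'n"
  shows "y \<in> cbox A B \<longleftrightarrow> (\<forall>l. y$l \<in> cbox (A$l) (B$l))"
  by (auto simp: mem_box Basis_vec_def inner_axis)

lemma open_U:
  fixes \<sigma> :: "'d::finite \<Rightarrow> 'd"
  shows "open {p :: (real^'d) \<times> ((real^'d)^'d). \<forall>s. fst p $ \<sigma> s \<noteq> (snd p $ s) $ \<sigma> s}"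
proof -
  have eq: "{p :: (real^'d) \<times> ((real^'d)^'d). \<forall>s. fst p $ \<sigma> s \<noteq> (snd p $ s) $ \<sigma> s}
      = (\<Inter>s\<in>UNIV. {p. fst p $ \<sigma> s \<noteq> (snd p $ s) $ \<sigma> s})" by auto
  show ?thesis unfolding eq
    by (intro open_INT ballI open_Collect_neq continuous_intros) simp
qed

lemma grid_mem_props:
  fixes a b :: "real^'d"
  assumes ab: "\<And>i. a$i \<le> b$i" and N: "N > 0" and R: "R \<in> grid a b N"
  shows "R \<noteq> {}" "compact R" "R \<subseteq> cbox a b"
proof -
  have cp: "cube_partition (cbox a b) (grid a b N)" by (rule grid_partition[OF ab N])
  then have "is_cube R" "R \<subseteq> cbox a b" using R by (auto simp: cube_partition_def)
  then obtain l u where lu: "\<forall>i. l$i \<le> u$i" "R = cbox l u" by (auto simp: is_cube_def)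
  show "R \<noteq> {}" using lu by (auto simp: interval_ne_empty_cart(1) less_eq_vec_def)
  show "compact R" using lu by simp
  show "R \<subseteq> cbox a b" by fact
qed

lemma part2:
  fixes Q0 :: "(real^'d) set" and Q :: "'d \<Rightarrow> (real^'d) set"
  assumes c0: "is_cube Q0" and cQ: "\<forall>l. is_cube (Q l)"
   and H: "\<forall>x1\<in>Q0. \<forall>x. (\<forall>l. x l \<in> Q l) \<longrightarrow> BL (Lmap x1) (\<lambda>_. 1 / real CARD('d)) (Mmap x) (\<lambda>_. 1 / real CARD('d)) < \<infinity>"
  shows "\<exists>P0 P. cube_partition Q0 P0 \<and> (\<forall>l. cube_partition (Q l) (P l)) \<and>
                 (\<forall>R0\<in>P0. \<forall>R. (\<forall>l. R l \<in> P l) \<longrightarrow> weakly_transversal R0 R)"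
proof -
  obtain a0 b0 where ab0: "\<And>i. a0$i \<le> b0$i" and Q0: "Q0 = cbox a0 b0" using c0 by (auto simp: is_cube_def)
  have "\<forall>l. \<exists>a b. (\<forall>i. a $ i \<le> b $ i) \<and> Q l = cbox a b" using cQ by (simp add: is_cube_def)
  then obtain al bl where abl: "\<And>l i. al l $ i \<le> bl l $ i" and Ql: "\<And>l. Q l = cbox (al l) (bl l)"
    by metis
  define Y where "Y = cbox (\<chi> l. al l) (\<chi> l. bl l)"
  have Y: "y \<in> Y \<longleftrightarrow> (\<forall>l. y$l \<in> Q l)" for y
    by (simp add: Y_def mem_cbox_vecvec Ql)
  define KK where "KK = Q0 \<times> Y"
  have cKK: "compact KK" unfolding KK_def Q0 Y_def by (intro compact_Times compact_cbox)
  define U where "U \<sigma> = {p :: (real^'d) \<times> ((real^'d)^'d). \<forall>s. fst p $ \<sigma> s \<noteq> (snd p $ s) $ \<sigma> s}" for \<sigma> :: "'d \<Rightarrow> 'd"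
  define Gs where "Gs = U ` {\<sigma>. bij \<sigma>}"
  have opn: "\<And>G. G \<in> Gs \<Longrightarrow> open G" unfolding Gs_def U_def using open_U by blast
  have cov: "KK \<subseteq> \<Union>Gs"
  proof
    fix p assume p: "p \<in> KK"
    then have "fst p \<in> Q0" "\<forall>l. (\<lambda>l. snd p $ l) l \<in> Q l" using Y by (auto simp: KK_def)
    then have "BL (Lmap (fst p)) (\<lambda>_. 1 / real CARD('d)) (Mmap (\<lambda>l. snd p $ l)) (\<lambda>_. 1 / real CARD('d)) < \<infinity>"
      using H by blast
    then obtain \<sigma> where "bij \<sigma>" "\<forall>s. fst p $ \<sigma> s \<noteq> (snd p $ s) $ \<sigma> s"
      using pointwise_sigma by blast
    then show "p \<in> \<Union>Gs" unfolding Gs_def U_def by blast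
  qed
  obtain e where e: "0 < e" and eb: "\<And>p. p \<in> KK \<Longrightarrow> \<exists>G\<in>Gs. ball p e \<subseteq> G"
    using Heine_Borel_lemma[OF cKK cov opn] by metis
  define D0 where "D0 = (\<Sum>i\<in>UNIV. b0$i - a0$i)"
  define Dl where "Dl l = (\<Sum>i\<in>UNIV. bl l $ i - al l $ i)" for l
  define D where "D = D0 + (\<Sum>l\<in>UNIV. Dl l)"
  have D00: "D0 \<ge> 0" unfolding D0_def using ab0 by (intro sum_nonneg) (simp add: algebra_simps)
  have Dl0: "Dl l \<ge> 0" for l unfolding Dl_def using abl by (intro sum_nonneg) (simp add: algebra_simps)
  have D0: "D \<ge> 0" unfolding D_def using D00 Dl0 by (simp add: sum_nonneg)
  define N where "N = nat \<lceil>D / e\<rceil> + 1"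
  have N0: "N > 0" by (simp add: N_def)
  have DN: "D / real N < e"
  proof -
    have "D / e \<le> real (nat \<lceil>D / e\<rceil>)" by linarith
    then have "D / e < real N" by (simp add: N_def)
    then have "D < real N * e" using e by (simp add: divide_less_eq)
    then show ?thesis using N0 by (simp add: divide_less_eq mult.commute)
  qed
  define P0 where "P0 = grid a0 b0 N"
  define P where "P l = grid (al l) (bl l) N" for l
  have part0: "cube_partition Q0 P0" unfolding Q0 P0_def by (rule grid_partition[OF ab0 N0])
  have partl: "\<forall>l. cube_partition (Q l) (P l)" unfolding Ql P_def using grid_partition[OF abl N0] by blast
  have wt: "weakly_transversal R0 R" if R0: "R0 \<in> P0" and R: "\<forall>l. R l \<in> P l" for R0 R
  proof -
    have R0p: "R0 \<noteq> {}" "compact R0" "R0 \<subseteq> Q0" using grid_mem_props[OF ab0 N0] R0 by (auto simp: P0_def Q0)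
    have Rp: "R l \<noteq> {}" "compact (R l)" "R l \<subseteq> Q l" for l
    proof -
      have "R l \<in> grid (al l) (bl l) N" using R by (simp add: P_def)
      from grid_mem_props[OF abl N0 this] show "R l \<noteq> {}" "compact (R l)" "R l \<subseteq> Q l" by (auto simp: Ql)
    qed
    obtain c0 where c0: "c0 \<in> R0" using R0p by blast
    define c where "c l = (SOME y. y \<in> R l)" for l
    have cl: "c l \<in> R l" for l using Rp(1)[of l] unfolding c_def by (meson ex_in_conv someI_ex)
    define pc where "pc = (c0, \<chi> l. c l)"
    have "c l \<in> Q l" for l using cl[of l] Rp(3)[of l] by blast
    then have pcK: "pc \<in> KK" using c0 R0p Y by (auto simp: KK_def pc_def)
    obtain G where G: "G \<in> Gs" "ball pc e \<subseteq> G" using eb[OF pcK] by blast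
    then obtain \<sigma> where \<sigma>: "bij \<sigma>" "G = U \<sigma>" by (auto simp: Gs_def)
    show ?thesis unfolding weakly_transversal_def
    proof (intro exI conjI allI)
      show "bij \<sigma>" by fact
      fix s
      have cl0: "closure ((\<lambda>x. x $ \<sigma> s) ` R0) = (\<lambda>x. x $ \<sigma> s) ` R0"
        by (intro closure_closed compact_imp_closed compact_continuous_image continuous_intros R0p)
      have cls: "closure ((\<lambda>x. x $ \<sigma> s) ` R s) = (\<lambda>x. x $ \<sigma> s) ` R s"
        by (intro closure_closed compact_imp_closed compact_continuous_image continuous_intros Rp)
      show "closure ((\<lambda>x. x $ \<sigma> s) ` R0) \<inter> closure ((\<lambda>x. x $ \<sigma> s) ` R s) = {}"
      proof (rule ccontr)
        assume "closure ((\<lambda>x. x $ \<sigma> s) ` R0) \<inter> closure ((\<lambda>x. x $ \<sigma> s) ` R s) \<noteq> {}"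
        then obtain y0 y where y0: "y0 \<in> R0" and y: "y \<in> R s" and eq: "y0 $ \<sigma> s = y $ \<sigma> s"
          unfolding cl0 cls by auto
        define yv :: "(real^'d)^'d" where "yv = (\<chi> l. if l = s then y else c l)"
        define p' where "p' = (y0, yv)"
        have d1: "dist c0 y0 \<le> D0 / real N"
          unfolding D0_def by (rule grid_small[OF ab0 N0 _ c0 y0]) (use R0 in \<open>simp add: P0_def\<close>)
        have d2: "dist (c s) y \<le> Dl s / real N"
          unfolding Dl_def by (rule grid_small[OF abl N0 _ cl y]) (use R in \<open>simp add: P_def\<close>)
        have "dist (\<chi> l. c l) yv = norm ((\<chi> l. c l) - yv)" by (simp add: dist_norm)
        also have "\<dots> \<le> (\<Sum>l\<in>UNIV. norm (((\<chi> l. c l) - yv) $ l))"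
          by (simp add: norm_vec_def L2_set_le_sum)
        also have "(\<Sum>l\<in>UNIV. norm (((\<chi> l. c l) - yv) $ l)) = (\<Sum>l\<in>UNIV. if l = s then dist (c s) y else 0)"
          by (rule sum.cong) (auto simp: yv_def dist_norm)
        also have "\<dots> = dist (c s) y" by simp
        finally have d3: "dist (\<chi> l. c l) yv \<le> Dl s / real N" using d2 by linarith
        have "Dl s \<le> (\<Sum>l\<in>UNIV. Dl l)" by (rule member_le_sum) (auto simp: Dl0)
        then have d4: "Dl s / real N \<le> (\<Sum>l\<in>UNIV. Dl l) / real N" using N0 by (simp add: divide_right_mono)
        have "dist pc p' = sqrt ((dist c0 y0)\<^sup>2 + (dist (\<chi> l. c l) yv)\<^sup>2)"
          by (simp add: pc_def p'_def dist_Pair_Pair)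
        also have "\<dots> \<le> dist c0 y0 + dist (\<chi> l. c l) yv" by (rule sqrt_sum_squares_le_sum) auto
        also have "\<dots> \<le> D0 / real N + (\<Sum>l\<in>UNIV. Dl l) / real N" using d1 d3 d4 by linarith
        also have "\<dots> = D / real N" by (simp add: D_def add_divide_distrib)
        also have "\<dots> < e" by (rule DN)
        finally have "p' \<in> ball pc e" by (simp add: dist_commute)
        then have "p' \<in> U \<sigma>" using G \<sigma> by blast
        then have "y0 $ \<sigma> s \<noteq> (yv $ s) $ \<sigma> s" by (simp add: U_def p'_def)
        then show False using eq by (simp add: yv_def)
      qed
    qed
  qed
  show ?thesis using part0 partl wt by blast
qed


theorem theorem13p3:
  fixes Q0 :: "(real^'d) set" and Q :: "'d \<Rightarrow> (real^'d) set"
  assumes "is_cube Q0" and "\<forall>l. is_cube (Q l)"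
  shows "(weakly_transversal Q0 Q \<longrightarrow>
            (\<forall>x1\<in>Q0. \<forall>x. (\<forall>l. x l \<in> Q l) \<longrightarrow>
               BL (Lmap x1) (\<lambda>_. 1 / real CARD('d)) (Mmap x) (\<lambda>_. 1 / real CARD('d)) < \<infinity>))
       \<and> ((\<forall>x1\<in>Q0. \<forall>x. (\<forall>l. x l \<in> Q l) \<longrightarrow>
               BL (Lmap x1) (\<lambda>_. 1 / real CARD('d)) (Mmap x) (\<lambda>_. 1 / real CARD('d)) < \<infinity>)
          \<longrightarrow> (\<exists>P0 P. cube_partition Q0 P0 \<and> (\<forall>l. cube_partition (Q l) (P l)) \<and>
                 (\<forall>R0\<in>P0. \<forall>R. (\<forall>l. R l \<in> P l) \<longrightarrow> weakly_transversal R0 R)))"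
proof (intro conjI impI)
  assume "weakly_transversal Q0 Q"
  then obtain \<sigma> :: "'d \<Rightarrow> 'd" where \<sigma>0: "bij \<sigma> \<and>
        (\<forall>s. closure ((\<lambda>x. x $ \<sigma> s) ` Q0) \<inter> closure ((\<lambda>x. x $ \<sigma> s) ` Q s) = {})"
    unfolding weakly_transversal_def by (rule exE)
  have \<sigma>: "bij \<sigma>" using \<sigma>0 by (rule conjunct1)
  have dj: "closure ((\<lambda>x. x $ \<sigma> s) ` Q0) \<inter> closure ((\<lambda>x. x $ \<sigma> s) ` Q s) = {}" for s
    using \<sigma>0 by simp
  show "\<forall>x1\<in>Q0. \<forall>x. (\<forall>l. x l \<in> Q l) \<longrightarrow>
               BL (Lmap x1) (\<lambda>_. 1 / real CARD('d)) (Mmap x) (\<lambda>_. 1 / real CARD('d)) < \<infinity>"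
  proof (intro ballI allI impI)
    fix x1 x assume x1: "x1 \<in> Q0" and x: "\<forall>l. x l \<in> Q l"
    have ne: "x1 $ \<sigma> s \<noteq> x s $ \<sigma> s" for s
    proof
      assume eq: "x1 $ \<sigma> s = x s $ \<sigma> s"
      have "x1 $ \<sigma> s \<in> (\<lambda>x. x $ \<sigma> s) ` Q0" using x1 by (rule imageI)
      then have A: "x1 $ \<sigma> s \<in> closure ((\<lambda>x. x $ \<sigma> s) ` Q0)" using closure_subset by (rule subsetD[rotated])
      have "x s \<in> Q s" using x by simp
      then have "x s $ \<sigma> s \<in> (\<lambda>x. x $ \<sigma> s) ` Q s" by (rule imageI)
      then have "x s $ \<sigma> s \<in> closure ((\<lambda>x. x $ \<sigma> s) ` Q s)" using closure_subset by (rule subsetD[rotated])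
      then have B: "x1 $ \<sigma> s \<in> closure ((\<lambda>x. x $ \<sigma> s) ` Q s)" using eq by simp
      from A B have "x1 $ \<sigma> s \<in> closure ((\<lambda>x. x $ \<sigma> s) ` Q0) \<inter> closure ((\<lambda>x. x $ \<sigma> s) ` Q s)" by (rule IntI)
      then show False using dj[of s] by simp
    qed
    show "BL (Lmap x1) (\<lambda>_. 1 / real CARD('d)) (Mmap x) (\<lambda>_. 1 / real CARD('d)) < \<infinity>"
      by (rule bl_finite[OF \<sigma> ne])
  qed
next
  assume "\<forall>x1\<in>Q0. \<forall>x. (\<forall>l. x l \<in> Q l) \<longrightarrow>
               BL (Lmap x1) (\<lambda>_. 1 / real CARD('d)) (Mmap x) (\<lambda>_. 1 / real CARD('d)) < \<infinity>"
  then show "\<exists>P0 P. cube_partition Q0 P0 \<and> (\<forall>l. cube_partition (Q l) (P l)) \<and>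
                 (\<forall>R0\<in>P0. \<forall>R. (\<forall>l. R l \<in> P l) \<longrightarrow> weakly_transversal R0 R)"
    by (rule part2[OF assms])
qed


end
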